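(* Let $Q \ge 2$ be an integer, let $F_Q = \{a/q : 1 \le a \le q \le Q,\ \gcd(a,q) = 1\}$ be the $Q$-th Farey sequence with elements listed in increasing order as $\gamma_1 < \gamma_2 < \cdots < \gamma_N$, where $N = |F_Q|$, and let $$S_2(Q) = \sum_{j=1}^{N-1} (\gamma_{j+1} - \gamma_j)^2.$$ Then $$S_2(Q) = \frac{12 \log Q}{\pi^2 Q^2} - \frac{2}{Q^2}\,\frac{\zeta'(2)}{\zeta(2)^2} + (2\gamma + 1)\frac{6}{Q^2 \pi^2} + R_{14},$$ where $$R_{14} \le \frac{64 (\log Q)^2 + 106 \log Q + 269}{Q^3}.$$
   Context: $\gamma$ denotes the Euler–Mascheroni constant, $\zeta$ is the Riemann zeta function, and $\log$ is the natural logarithm. *)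

theory Defs
  imports "HOL-Analysis.Analysis"
begin

definition zeta_real :: "real \<Rightarrow> real" where
  "zeta_real s = (\<Sum>n. 1 / (real (Suc n)) powr s)"

definition farey :: "nat \<Rightarrow> real set" where
  "farey Q = {real a / real q | a q. 1 \<le> a \<and> a \<le> q \<and> q \<le> Q \<and> coprime a q}"

definition farey_list :: "nat \<Rightarrow> real list" where
  "farey_list Q = sorted_list_of_set (farey Q)"

definition S2 :: "nat \<Rightarrow> real" where
  "S2 Q = (let g = farey_list Q in
     \<Sum>j < length g - 1. (g ! (j + 1) - g ! j)^2)"

end

theory Submission
  imports Defs "HOL-Computational_Algebra.Squarefree" "HOL-Computational_Algebra.Primes"
begin

definition dser :: "(nat \<Rightarrow> real) \<Rightarrow> real \<Rightarrow> real" where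
  "dser a s = (\<Sum>n. a (Suc n) / real (Suc n) powr s)"

lemma summable_Suc_powr:
  assumes "s > 1" shows "summable (\<lambda>n. 1 / real (Suc n) powr s)"
proof -
  have "summable (\<lambda>n. real n powr (-s))" using assms by (simp add: summable_real_powr_iff)
  hence "summable (\<lambda>n. real (Suc n) powr (-s))" by (subst summable_Suc_iff)
  thus ?thesis by (simp add: powr_minus divide_inverse)
qed

lemma dser_summable:
  assumes "s > 1" "\<And>n. \<bar>a n\<bar> \<le> 1"
  shows "summable (\<lambda>n. a (Suc n) / real (Suc n) powr s)"
proof (rule summable_comparison_test[OF _ summable_Suc_powr[OF assms(1)]])
  show "\<exists>N. \<forall>n\<ge>N. norm (a (Suc n) / real (Suc n) powr s) \<le> 1 / real (Suc n) powr s"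
    using assms(2) by (auto simp: abs_div intro!: divide_right_mono)
qed

lemma term_deriv:
  fixes b k x :: real
  assumes "b > 0"
  shows "((\<lambda>x. k / b powr x) has_field_derivative (- (k * ln b) / b powr x)) (at x within S)"
proof -
  have b0: "b \<noteq> 0" using assms by simp
  have e: "(\<lambda>x. k / b powr x) = (\<lambda>x. k * exp (- (x * ln b)))"
    using b0 by (simp add: fun_eq_iff powr_def exp_minus divide_inverse)
  have "((\<lambda>x. k * exp (- (x * ln b))) has_field_derivative (k * (exp (- (x * ln b)) * (- ln b)))) (at x within S)"
    by (auto intro!: derivative_eq_intros)
  moreover have "k * (exp (- (x * ln b)) * (- ln b)) = - (k * ln b) / b powr x"
    using b0 by (simp add: powr_def exp_minus divide_inverse)
  ultimately show ?thesis by (simp add: e)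
qed

lemma dser_deriv:
  assumes "s > 1" "\<And>n. \<bar>a n\<bar> \<le> 1"
  shows "(dser a has_field_derivative (- (\<Sum>n. a (Suc n) * ln (real (Suc n)) / real (Suc n) powr s))) (at s)"
proof -
  define \<sigma> where "\<sigma> = (1 + s) / 2"
  define \<epsilon> where "\<epsilon> = (\<sigma> - 1) / 2"
  have \<sigma>1: "\<sigma> > 1" "\<sigma> < s" using assms by (auto simp: \<sigma>_def)
  have \<epsilon>0: "\<epsilon> > 0" using \<sigma>1 by (simp add: \<epsilon>_def)
  define f where "f n x = a (Suc n) / real (Suc n) powr x" for n x
  define f' where "f' n x = - (a (Suc n) * ln (real (Suc n))) / real (Suc n) powr x" for n x
  define M where "M n = (1/\<epsilon>) * (1 / real (Suc n) powr (\<sigma> - \<epsilon>))" for n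
  have sM: "summable M" unfolding M_def
    by (intro summable_mult summable_Suc_powr) (use \<sigma>1 in \<open>simp add: \<epsilon>_def field_simps\<close>)
  have bound: "norm (f' n x) \<le> M n" if "x \<in> {\<sigma><..}" for n x
  proof -
    have x: "x > \<sigma>" using that by simp
    have ln0: "ln (real (Suc n)) \<ge> 0" by simp
    have lnb: "ln (real (Suc n)) \<le> real (Suc n) powr \<epsilon> / \<epsilon>"
      by (rule ln_powr_bound) (use \<epsilon>0 in auto)
    have "norm (f' n x) = \<bar>a (Suc n)\<bar> * ln (real (Suc n)) / real (Suc n) powr x"
      unfolding f'_def using ln0 by (simp add: abs_mult abs_div)
    also have "\<dots> \<le> 1 * ln (real (Suc n)) / real (Suc n) powr x"
      using assms(2) ln0 by (intro divide_right_mono mult_right_mono) auto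
    also have "\<dots> \<le> ln (real (Suc n)) / real (Suc n) powr \<sigma>"
    proof -
      have "real (Suc n) powr \<sigma> \<le> real (Suc n) powr x" using x by (intro powr_mono) auto
      thus ?thesis using ln0 by (simp only: mult_1) (rule divide_left_mono; simp)
    qed
    also have "\<dots> \<le> (real (Suc n) powr \<epsilon> / \<epsilon>) / real (Suc n) powr \<sigma>"
      by (intro divide_right_mono lnb) auto
    also have "\<dots> = M n" unfolding M_def by (simp add: powr_diff field_simps)
    finally show ?thesis .
  qed
  have uc: "uniformly_convergent_on {\<sigma><..} (\<lambda>n x. \<Sum>i<n. f' i x)"
    unfolding uniformly_convergent_on_def
  proof (intro exI)
    show "uniform_limit {\<sigma><..} (\<lambda>n x. \<Sum>i<n. f' i x) (\<lambda>x. \<Sum>i. f' i x) sequentially"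
      by (rule Weierstrass_m_test[OF _ sM]) (rule bound)
  qed
  have D: "((\<lambda>x. \<Sum>n. f n x) has_field_derivative (\<Sum>n. f' n s)) (at s)"
  proof (rule has_field_derivative_series'(2)[of "{\<sigma><..}" f f' s])
    show "convex {\<sigma><..}" by simp
    show "\<And>n x. x \<in> {\<sigma><..} \<Longrightarrow> (f n has_field_derivative f' n x) (at x within {\<sigma><..})"
      unfolding f_def f'_def by (rule term_deriv) simp
    show "uniformly_convergent_on {\<sigma><..} (\<lambda>n x. \<Sum>i<n. f' i x)" by (rule uc)
    show "s \<in> {\<sigma><..}" using \<sigma>1 by simp
    show "summable (\<lambda>n. f n s)" unfolding f_def by (rule dser_summable[OF assms])
    show "s \<in> interior {\<sigma><..}" using \<sigma>1 by (simp add: interior_open)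
  qed
  have E1: "(\<lambda>x. \<Sum>n. f n x) = dser a" by (simp add: fun_eq_iff f_def dser_def)
  have E2: "(\<Sum>n. f' n s) = - (\<Sum>n. a (Suc n) * ln (real (Suc n)) / real (Suc n) powr s)"
  proof -
    have "summable (\<lambda>n. f' n s)"
      by (rule summable_comparison_test[OF _ sM]) (use bound \<sigma>1 in auto)
    hence "summable (\<lambda>n. a (Suc n) * ln (real (Suc n)) / real (Suc n) powr s)"
      unfolding f'_def using summable_minus by fastforce
    thus ?thesis unfolding f'_def by (subst suminf_minus[symmetric]) auto
  qed
  show ?thesis using D unfolding E1 E2 .
qed

lemma zeta_dser: "zeta_real = dser (\<lambda>_. 1)"
  by (simp add: fun_eq_iff zeta_real_def dser_def)

definition mu :: "nat \<Rightarrow> real" where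
  "mu n = (if squarefree n then (-1) ^ card (prime_factors n) else 0)"

lemma mu_abs: "\<bar>mu n\<bar> \<le> 1"
  by (simp add: mu_def)

lemma mu_1: "mu 1 = 1"
  by (simp add: mu_def)

lemma mu_sq: assumes "prime p" "p^2 dvd d" shows "mu d = 0"
proof -
  have "\<not> p dvd 1" using assms(1) by auto
  hence "\<not> squarefree d" using assms(2) by (intro not_squarefreeI[of p d])
  thus ?thesis by (simp add: mu_def)
qed

lemma mu_mult_prime:
  assumes p: "prime p" and nd: "\<not> p dvd d" and d0: "d > 0"
  shows "mu (p * d) = - mu d"
proof -
  have cop: "coprime p d" using p nd by (simp add: prime_imp_coprime)
  have sq: "squarefree (p * d) \<longleftrightarrow> squarefree d"
  proof
    assume "squarefree (p * d)" thus "squarefree d" by (rule squarefree_mono[rotated]) simp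
  next
    assume "squarefree d" thus "squarefree (p * d)"
      using cop p by (intro squarefree_mult_coprime) (auto simp: squarefree_prime)
  qed
  have pf: "prime_factors (p * d) = insert p (prime_factors d)"
    using p d0 by (subst prime_factors_product) (auto simp: prime_prime_factors prime_gt_0_nat)
  have np: "p \<notin> prime_factors d" using nd by (auto simp: in_prime_factors_iff)
  have "card (prime_factors (p * d)) = Suc (card (prime_factors d))"
    unfolding pf using np by (simp add: card_insert_disjoint)
  thus ?thesis unfolding mu_def sq by simp
qed

lemma mu_divsum:
  assumes n0: "n > 0"
  shows "(\<Sum>d\<in>{d. d dvd n}. mu d) = (if n = 1 then 1 else 0)"
proof (cases "n = 1")
  case True
  thus ?thesis using mu_1 by simp
next
  case False
  then obtain p where p: "prime p" "p dvd n" using prime_factor_nat by blast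
  define m where "m = n div p"
  have nm: "n = p * m" using p by (simp add: m_def)
  have m0: "m > 0" using n0 nm by (cases m) auto
  have p0: "p > 0" using p by (simp add: prime_gt_0_nat)
  define D1 where "D1 = {d. d dvd n \<and> \<not> p dvd d}"
  define D2 where "D2 = {d. d dvd n \<and> p dvd d}"
  have fin: "finite {d. d dvd n}" using n0 by simp
  have split: "{d. d dvd n} = D1 \<union> D2" "D1 \<inter> D2 = {}" by (auto simp: D1_def D2_def)
  have fD1: "finite D1" "finite D2" using fin by (auto simp: D1_def D2_def)
  have s1: "(\<Sum>d\<in>{d. d dvd n}. mu d) = (\<Sum>d\<in>D1. mu d) + (\<Sum>d\<in>D2. mu d)"
    unfolding split(1) by (rule sum.union_disjoint) (use fD1 split in auto)
  have D2eq: "D2 = (\<lambda>e. p * e) ` {e. e dvd m}"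
  proof (intro set_eqI iffI)
    fix d assume "d \<in> D2"
    then obtain e where "d = p * e" "d dvd n" by (auto simp: D2_def)
    thus "d \<in> (\<lambda>e. p * e) ` {e. e dvd m}" using nm p0 by auto
  next
    fix d assume "d \<in> (\<lambda>e. p * e) ` {e. e dvd m}"
    thus "d \<in> D2" using nm by (auto simp: D2_def)
  qed
  have "(\<Sum>d\<in>D2. mu d) = (\<Sum>e\<in>{e. e dvd m}. mu (p * e))"
    unfolding D2eq using p0 by (subst sum.reindex) (auto simp: inj_on_def)
  also have "\<dots> = (\<Sum>e\<in>{e. e dvd m}. if p dvd e then 0 else - mu e)"
  proof (intro sum.cong refl)
    fix e assume e: "e \<in> {e. e dvd m}"
    hence e0: "e > 0" using m0 by (auto intro: Nat.gr0I)
    show "mu (p * e) = (if p dvd e then 0 else - mu e)"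
    proof (cases "p dvd e")
      case True
      hence "p^2 dvd p * e" by (auto simp: power2_eq_square)
      thus ?thesis using True mu_sq[OF p(1)] by simp
    qed (simp add: mu_mult_prime[OF p(1) _ e0])
  qed
  also have "\<dots> = - (\<Sum>e\<in>{e. e dvd m \<and> \<not> p dvd e}. mu e)"
  proof -
    have "finite {e. e dvd m}" using m0 by simp
    hence "(\<Sum>e\<in>{e. e dvd m}. if p dvd e then 0 else - mu e)
        = (\<Sum>e\<in>{e \<in> {e. e dvd m}. \<not> p dvd e}. - mu e)"
      by (subst sum.inter_filter) (auto intro!: sum.cong)
    thus ?thesis by (simp add: sum_negf)
  qed
  also have "{e. e dvd m \<and> \<not> p dvd e} = D1"
  proof (intro set_eqI iffI)
    fix e assume "e \<in> {e. e dvd m \<and> \<not> p dvd e}"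
    thus "e \<in> D1" using nm by (auto simp: D1_def)
  next
    fix e assume e: "e \<in> D1"
    hence "coprime e p" using p by (subst coprime_commute) (auto simp: D1_def prime_imp_coprime)
    hence "e dvd m" using e nm by (auto simp: D1_def coprime_dvd_mult_right_iff)
    thus "e \<in> {e. e dvd m \<and> \<not> p dvd e}" using e by (auto simp: D1_def)
  qed
  finally show ?thesis using s1 False by simp
qed

lemma sum_prod_helper:
  fixes c :: real
  shows "(\<Sum>d\<in>A. \<Sum>e\<in>B. c * (f d * g e)) = c * (sum f A * sum g B)"
proof -
  have "sum f A * sum g B = (\<Sum>d\<in>A. \<Sum>e\<in>B. f d * g e)" by (rule sum_product)
  thus ?thesis by (simp only: sum_distrib_left)
qed

lemma dirichlet_finite:
  assumes N: "N \<ge> 1"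
  shows "(\<Sum>d=1..N. \<Sum>e=1..N. if d * e \<le> N then mu d / real (d * e) powr s else 0) = 1"
proof -
  define T where "T = {p \<in> {1..N} \<times> {1..N}. fst p * snd p \<le> N}"
  have "(\<Sum>d=1..N. \<Sum>e=1..N. if d * e \<le> N then mu d / real (d * e) powr s else 0)
      = (\<Sum>p\<in>{1..N} \<times> {1..N}. if fst p * snd p \<le> N then mu (fst p) / real (fst p * snd p) powr s else 0)"
    by (subst sum.cartesian_product) (simp add: case_prod_beta)
  also have "\<dots> = (\<Sum>p\<in>T. mu (fst p) / real (fst p * snd p) powr s)"
    unfolding T_def by (subst sum.inter_filter) auto
  also have "\<dots> = (\<Sum>p\<in>Sigma {1..N} (\<lambda>n. {d. d dvd n}). mu (snd p) / real (fst p) powr s)"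
  proof (rule sum.reindex_bij_witness[where i = "\<lambda>p. (snd p, fst p div snd p)" and j = "\<lambda>p. (fst p * snd p, fst p)"])
    fix a assume a: "a \<in> Sigma {1..N} (\<lambda>n. {d. d dvd n})"
    then obtain n d where nd: "a = (n, d)" "1 \<le> n" "n \<le> N" "d dvd n" by auto
    have d0: "d > 0" using nd by (auto intro: Nat.gr0I)
    show "(fst (snd a, fst a div snd a) * snd (snd a, fst a div snd a), fst (snd a, fst a div snd a)) = a"
      using nd by auto
    have "n div d \<ge> 1" using nd d0 by (auto simp: Suc_le_eq dvd_div_eq_0_iff)
    moreover have "d \<le> n" "n div d \<le> n" using nd by (auto simp: dvd_imp_le)
    moreover have "n div d \<le> N" using div_le_dividend[of n d] nd(3) by linarith
    ultimately show "(snd a, fst a div snd a) \<in> T" using nd d0 by (auto simp: T_def)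
  next
    fix b assume b: "b \<in> T"
    then obtain d e where de: "b = (d, e)" "1 \<le> d" "1 \<le> e" "d * e \<le> N" by (auto simp: T_def)
    show "(snd (fst b * snd b, fst b), fst (fst b * snd b, fst b) div snd (fst b * snd b, fst b)) = b"
      using de by auto
    have "1 \<le> d * e" using de by simp
    thus "(fst b * snd b, fst b) \<in> Sigma {1..N} (\<lambda>n. {d. d dvd n})" using de by auto
    show "mu (snd (fst b * snd b, fst b)) / real (fst (fst b * snd b, fst b)) powr s
          = mu (fst b) / real (fst b * snd b) powr s" using de by simp
  qed
  also have "\<dots> = (\<Sum>n=1..N. \<Sum>d\<in>{d. d dvd n}. mu d / real n powr s)"
    by (subst sum.Sigma) (auto simp: split_beta)
  also have "\<dots> = (\<Sum>n=1..N. (\<Sum>d\<in>{d. d dvd n}. mu d) / real n powr s)"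
    by (simp add: sum_divide_distrib)
  also have "\<dots> = (\<Sum>n=1..N. (if n = 1 then 1 else 0) / real n powr s)"
    by (intro sum.cong refl) (subst mu_divsum, auto)
  also have "\<dots> = (\<Sum>n\<in>{1}. (if n = 1 then 1 else 0) / real n powr s)"
    using N by (intro sum.mono_neutral_right) auto
  finally show ?thesis by simp
qed

lemma dirichlet_mu_zeta:
  assumes s: "s > 1"
  shows "dser mu s * zeta_real s = 1"
proof -
  define \<delta> where "\<delta> = (s - 1) / 2"
  have \<delta>0: "\<delta> > 0" using s by (simp add: \<delta>_def)
  define Z where "Z = (\<Sum>n. 1 / real (Suc n) powr (1 + \<delta>))"
  have sZ: "summable (\<lambda>n. 1 / real (Suc n) powr (1 + \<delta>))" using \<delta>0 by (intro summable_Suc_powr) simp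
  have Z0: "0 \<le> Z" unfolding Z_def by (intro suminf_nonneg sZ) auto
  define P where "P N = (\<Sum>n<N. mu (Suc n) / real (Suc n) powr s) * (\<Sum>n<N. 1 / real (Suc n) powr s)" for N
  have lim1: "P \<longlonglongrightarrow> dser mu s * zeta_real s"
    unfolding P_def dser_def zeta_real_def
    by (intro tendsto_mult summable_LIMSEQ dser_summable summable_Suc_powr s mu_abs)
  have bnd: "norm (P N - 1) \<le> Z^2 * real N powr (-\<delta>)" if N: "N \<ge> 1" for N
  proof -
    define f where "f d e = mu d / real (d * e) powr s" for d e
    have "P N = (\<Sum>d=1..N. mu d / real d powr s) * (\<Sum>e=1..N. 1 / real e powr s)"
      unfolding P_def by (subst (1 2) sum_bounds_lt_plus1[symmetric]) (rule refl)
    also have "\<dots> = (\<Sum>d=1..N. \<Sum>e=1..N. f d e)"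
      by (simp add: sum_product f_def powr_mult)
    also have "\<dots> = (\<Sum>d=1..N. \<Sum>e=1..N. (if d * e \<le> N then f d e else 0) + (if d * e \<le> N then 0 else f d e))"
      by (intro sum.cong refl) auto
    also have "\<dots> = 1 + (\<Sum>d=1..N. \<Sum>e=1..N. if d * e \<le> N then 0 else f d e)"
      using dirichlet_finite[OF N, of s] unfolding f_def by (simp add: sum.distrib)
    finally have PN: "P N - 1 = (\<Sum>d=1..N. \<Sum>e=1..N. if d * e \<le> N then 0 else f d e)" by simp
    have tb: "norm (if d * e \<le> N then 0 else f d e) \<le> real N powr (-\<delta>) * (1 / real d powr (1 + \<delta>) * (1 / real e powr (1 + \<delta>)))"
      if de: "d \<in> {1..N}" "e \<in> {1..N}" for d e
    proof (cases "d * e \<le> N")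
      case False
      have pos: "real d > 0" "real e > 0" using de by auto
      have dN': "N < d * e" using False by simp
      have dN: "real N < real (d * e)" using dN' by (simp only: of_nat_less_iff)
      have "norm (f d e) = \<bar>mu d\<bar> / real (d * e) powr s" by (simp add: f_def)
      also have "\<dots> \<le> 1 / real (d * e) powr s" by (intro divide_right_mono mu_abs) simp
      also have "real (d * e) powr s = real (d * e) powr (1 + \<delta>) * real (d * e) powr \<delta>"
        by (simp add: powr_add[symmetric] \<delta>_def)
      also have "real (d * e) powr \<delta> \<ge> real N powr \<delta>"
        using dN N \<delta>0 by (intro powr_mono2) auto
      hence "1 / (real (d * e) powr (1 + \<delta>) * real (d * e) powr \<delta>) \<le> 1 / (real (d * e) powr (1 + \<delta>) * real N powr \<delta>)"
        using N pos by (intro divide_left_mono mult_left_mono mult_pos_pos) auto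
      also have "\<dots> = real N powr (-\<delta>) * (1 / real d powr (1 + \<delta>) * (1 / real e powr (1 + \<delta>)))"
        using pos by (simp add: powr_mult powr_minus field_simps)
      finally show ?thesis using False by simp
    qed simp
    have "norm (P N - 1) \<le> (\<Sum>d=1..N. \<Sum>e=1..N. norm (if d * e \<le> N then 0 else f d e))"
      unfolding PN by (rule order_trans[OF norm_sum sum_mono]) (rule norm_sum)
    also have "\<dots> \<le> (\<Sum>d=1..N. \<Sum>e=1..N. real N powr (-\<delta>) * (1 / real d powr (1 + \<delta>) * (1 / real e powr (1 + \<delta>))))"
      by (intro sum_mono tb) auto
    also have "\<dots> = real N powr (-\<delta>) * ((\<Sum>d=1..N. 1 / real d powr (1 + \<delta>)) * (\<Sum>e=1..N. 1 / real e powr (1 + \<delta>)))"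
      by (rule sum_prod_helper)
    also have "(\<Sum>d=1..N. 1 / real d powr (1 + \<delta>)) \<le> Z"
    proof -
      have "(\<Sum>d=1..N. 1 / real d powr (1 + \<delta>)) = (\<Sum>n<N. 1 / real (Suc n) powr (1 + \<delta>))"
        by (subst sum_bounds_lt_plus1[symmetric]) (rule refl)
      also have "\<dots> \<le> Z" unfolding Z_def by (intro sum_le_suminf sZ) auto
      finally show ?thesis .
    qed
    hence "real N powr (-\<delta>) * ((\<Sum>d=1..N. 1 / real d powr (1 + \<delta>)) * (\<Sum>e=1..N. 1 / real e powr (1 + \<delta>)))
        \<le> real N powr (-\<delta>) * (Z * Z)"
      using Z0 by (intro mult_left_mono mult_mono) (auto intro!: sum_nonneg)
    finally show ?thesis by (simp add: power2_eq_square mult_ac)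
  qed
  have "(\<lambda>N. P N - 1) \<longlonglongrightarrow> 0"
  proof (rule Lim_null_comparison)
    show "\<forall>\<^sub>F N in sequentially. norm (P N - 1) \<le> Z^2 * real N powr (-\<delta>)"
      using eventually_ge_at_top[of "1::nat"] by (rule eventually_mono) (rule bnd)
    have "(\<lambda>N. real N powr (-\<delta>)) \<longlonglongrightarrow> 0"
      using \<delta>0 by (intro tendsto_neg_powr filterlim_real_sequentially) simp
    thus "(\<lambda>N. Z^2 * real N powr (-\<delta>)) \<longlonglongrightarrow> 0"
      by (simp add: tendsto_mult_right_zero)
  qed
  hence "P \<longlonglongrightarrow> 1" by (simp add: LIM_zero_iff)
  with lim1 show ?thesis using LIMSEQ_unique by blast
qed

lemma zeta_2: "zeta_real 2 = pi^2 / 6"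
proof -
  have "(\<lambda>n. 1 / real (Suc n) powr 2) = (\<lambda>n. 1 / (real n + 1)^2)" by (simp add: fun_eq_iff)
  thus ?thesis unfolding zeta_real_def using inverse_squares_sums by (simp add: sums_iff)
qed

lemma mu_A2: "dser mu 2 = 6 / pi^2"
  using dirichlet_mu_zeta[of 2] zeta_2 by (simp add: field_simps)

lemma mu_A1:
  "(\<Sum>n. mu (Suc n) * ln (real (Suc n)) / real (Suc n) powr 2) = deriv zeta_real 2 / (zeta_real 2)^2"
proof -
  define A1 where "A1 = (\<Sum>n. mu (Suc n) * ln (real (Suc n)) / real (Suc n) powr 2)"
  define Zl where "Zl = (\<Sum>n. (\<lambda>_. 1::real) (Suc n) * ln (real (Suc n)) / real (Suc n) powr 2)"
  have dA: "(dser mu has_field_derivative - A1) (at 2)" unfolding A1_def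
    by (rule dser_deriv) (auto simp: mu_abs)
  have dZ: "(zeta_real has_field_derivative - Zl) (at 2)" unfolding Zl_def zeta_dser
    by (rule dser_deriv) auto
  have "((\<lambda>s. dser mu s * zeta_real s) has_field_derivative (- A1 * zeta_real 2 + (- Zl) * dser mu 2)) (at 2)"
    by (rule DERIV_mult[OF dA dZ])
  moreover have "((\<lambda>s. dser mu s * zeta_real s) has_field_derivative 0) (at 2)"
    by (rule has_field_derivative_transform_within_open[OF DERIV_const[of 1] _ _ , of "{1<..}"])
       (auto simp: dirichlet_mu_zeta)
  ultimately have eq: "- A1 * zeta_real 2 + (- Zl) * dser mu 2 = 0" by (rule DERIV_unique)
  have z0: "zeta_real 2 \<noteq> 0" by (simp add: zeta_2)
  have A2: "dser mu 2 = 1 / zeta_real 2" using dirichlet_mu_zeta[of 2] z0 by (simp add: field_simps)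
  have "deriv zeta_real 2 = - Zl" by (rule DERIV_imp_deriv[OF dZ])
  hence "deriv zeta_real 2 / (zeta_real 2)^2 = A1" using eq A2 z0 by (simp add: field_simps power2_eq_square)
  thus ?thesis unfolding A1_def by simp
qed

definition PS :: "nat \<Rightarrow> (nat \<times> nat) set" where
  "PS m = {(q, r). 1 \<le> q \<and> q \<le> m \<and> 1 \<le> r \<and> r \<le> m \<and> m < q + r}"

definition wt :: "nat \<times> nat \<Rightarrow> real" where
  "wt p = 1 / (real (fst p) * real (snd p))^2"

definition Vs :: "nat \<Rightarrow> real" where
  "Vs m = sum wt (PS m)"

definition Cs :: "nat \<Rightarrow> real" where
  "Cs Q = sum wt {p \<in> PS Q. coprime (fst p) (snd p)}"

lemma finite_PS: "finite (PS m)"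
proof -
  have "PS m \<subseteq> {1..m} \<times> {1..m}" by (auto simp: PS_def)
  thus ?thesis by (rule finite_subset) simp
qed

lemma PS_scale:
  assumes d: "d \<ge> 1"
  shows "(\<Sum>p\<in>{p \<in> PS Q. d dvd fst p \<and> d dvd snd p}. wt p) = Vs (Q div d) / real d ^ 4"
proof -
  have d0: "d > 0" using d by simp
  have "(\<Sum>p\<in>{p \<in> PS Q. d dvd fst p \<and> d dvd snd p}. wt p) = (\<Sum>p\<in>PS (Q div d). wt p / real d ^ 4)"
  proof (rule sum.reindex_bij_witness[where i = "\<lambda>p. (d * fst p, d * snd p)" and j = "\<lambda>p. (fst p div d, snd p div d)"])
    fix a assume "a \<in> {p \<in> PS Q. d dvd fst p \<and> d dvd snd p}"
    then obtain q r where a: "a = (q, r)" "1 \<le> q" "q \<le> Q" "1 \<le> r" "r \<le> Q" "Q < q + r" "d dvd q" "d dvd r"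
      by (auto simp: PS_def)
    show "(d * fst (fst a div d, snd a div d), d * snd (fst a div d, snd a div d)) = a"
      using a by auto
    obtain q' r' where qr: "q = d * q'" "r = d * r'" using a by (auto elim!: dvdE)
    have q'1: "1 \<le> q'" "1 \<le> r'" using a qr by (auto intro: Nat.gr0I simp: Suc_le_eq)
    have "q' \<le> Q div d" "r' \<le> Q div d" using a qr d0 by (auto simp: less_eq_div_iff_mult_less_eq mult.commute)
    moreover have "Q div d < q' + r'" using a qr d0 by (simp add: div_less_iff_less_mult algebra_simps)
    ultimately show "(fst a div d, snd a div d) \<in> PS (Q div d)"
      using a qr q'1 d0 by (auto simp: PS_def)
    show "wt (fst a div d, snd a div d) / real d ^ 4 = wt a"
      using a qr d0 by (simp add: wt_def power_mult_distrib field_simps)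
  next
    fix b assume "b \<in> PS (Q div d)"
    then obtain q r where b: "b = (q, r)" "1 \<le> q" "q \<le> Q div d" "1 \<le> r" "r \<le> Q div d" "Q div d < q + r"
      by (auto simp: PS_def)
    show "(fst (d * fst b, d * snd b) div d, snd (d * fst b, d * snd b) div d) = b" using b d0 by auto
    have "d * q \<le> Q" "d * r \<le> Q" using b d0 by (auto simp: less_eq_div_iff_mult_less_eq mult.commute)
    moreover have "Q < d * q + d * r" using b d0 by (simp add: div_less_iff_less_mult algebra_simps)
    moreover have "1 \<le> d * q" "1 \<le> d * r" using b d by auto
    ultimately show "(d * fst b, d * snd b) \<in> {p \<in> PS Q. d dvd fst p \<and> d dvd snd p}"
      using b by (auto simp: PS_def)
  qed
  also have "\<dots> = Vs (Q div d) / real d ^ 4" by (simp add: Vs_def sum_divide_distrib)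
  finally show ?thesis .
qed

lemma Cs_mu: "Cs Q = (\<Sum>d=1..Q. mu d / real d ^ 4 * Vs (Q div d))"
proof -
  have "Cs Q = (\<Sum>p\<in>PS Q. if coprime (fst p) (snd p) then wt p else 0)"
    unfolding Cs_def using finite_PS by (subst sum.inter_filter) auto
  also have "\<dots> = (\<Sum>p\<in>PS Q. \<Sum>d=1..Q. if d dvd fst p \<and> d dvd snd p then mu d * wt p else 0)"
  proof (intro sum.cong refl)
    fix p assume p: "p \<in> PS Q"
    then obtain q r where qr: "p = (q, r)" "1 \<le> q" "q \<le> Q" "1 \<le> r" by (auto simp: PS_def)
    have g0: "gcd q r > 0" using qr by simp
    have set: "{d. d dvd gcd q r} = {d \<in> {1..Q}. d dvd q \<and> d dvd r}"
    proof (intro set_eqI iffI)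
      fix d assume "d \<in> {d. d dvd gcd q r}"
      hence dd: "d dvd q" "d dvd r" by auto
      have "d \<le> q" using dd qr by (intro dvd_imp_le) auto
      moreover have "d \<ge> 1" using dd qr by (cases d) auto
      ultimately show "d \<in> {d \<in> {1..Q}. d dvd q \<and> d dvd r}" using dd qr by auto
    qed auto
    have "(if coprime q r then wt p else 0) = wt p * (\<Sum>d\<in>{d. d dvd gcd q r}. mu d)"
      using mu_divsum[OF g0] by (simp add: coprime_iff_gcd_eq_1)
    also have "\<dots> = (\<Sum>d\<in>{d \<in> {1..Q}. d dvd q \<and> d dvd r}. mu d * wt p)"
      unfolding set by (simp add: sum_distrib_left mult.commute)
    also have "\<dots> = (\<Sum>d=1..Q. if d dvd q \<and> d dvd r then mu d * wt p else 0)"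
      by (subst sum.inter_filter) auto
    finally show "(if coprime (fst p) (snd p) then wt p else 0)
        = (\<Sum>d=1..Q. if d dvd fst p \<and> d dvd snd p then mu d * wt p else 0)" using qr by simp
  qed
  also have "\<dots> = (\<Sum>d=1..Q. \<Sum>p\<in>PS Q. if d dvd fst p \<and> d dvd snd p then mu d * wt p else 0)"
    by (rule sum.swap)
  also have "\<dots> = (\<Sum>d=1..Q. mu d * (\<Sum>p\<in>{p \<in> PS Q. d dvd fst p \<and> d dvd snd p}. wt p))"
  proof (intro sum.cong refl)
    fix d
    show "(\<Sum>p\<in>PS Q. if d dvd fst p \<and> d dvd snd p then mu d * wt p else 0)
        = mu d * (\<Sum>p\<in>{p \<in> PS Q. d dvd fst p \<and> d dvd snd p}. wt p)"
      using finite_PS by (subst sum.inter_filter) (auto simp: sum_distrib_left intro!: sum.cong)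
  qed
  also have "\<dots> = (\<Sum>d=1..Q. mu d / real d ^ 4 * Vs (Q div d))"
    by (intro sum.cong refl) (simp add: PS_scale)
  finally show ?thesis .
qed

lemma ineq1: assumes "(x::real) \<ge> 1" shows "1/x^2 \<le> 1/(x - 1/2) - 1/(x + 1/2)"
proof -
  have a: "x - 1/2 > 0" "x + 1/2 > 0" using assms by auto
  have e: "1/(x - 1/2) - 1/(x + 1/2) = 1/((x - 1/2)*(x + 1/2))" using a by (simp add: field_simps)
  have "(x - 1/2)*(x + 1/2) \<le> x^2" by (simp add: power2_eq_square algebra_simps)
  moreover have "(x - 1/2)*(x + 1/2) > 0" using a by simp
  ultimately have "1/x^2 \<le> 1/((x - 1/2)*(x + 1/2))" by (intro frac_le) auto
  thus ?thesis using e by simp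
qed
lemma ineq2: assumes "(x::real) \<ge> 1" shows "1/(x - 1/3) - 1/(x + 2/3) \<le> 1/x^2"
proof -
  have a: "x - 1/3 > 0" "x + 2/3 > 0" using assms by auto
  have e: "1/(x - 1/3) - 1/(x + 2/3) = 1/((x - 1/3)*(x + 2/3))" using a by (simp add: field_simps)
  have "(x - 1/3)*(x + 2/3) = x^2 + (x/3 - 2/9)" by (simp add: power2_eq_square field_simps)
  hence "x^2 \<le> (x - 1/3)*(x + 2/3)" using assms by simp
  moreover have "x^2 > 0" using assms by simp
  ultimately have "1/((x - 1/3)*(x + 2/3)) \<le> 1/x^2" by (intro frac_le) auto
  thus ?thesis using e by simp
qed
lemma ineq3: assumes "(m::real) \<ge> 1" shows "1/(m + 1 - 1/2) - 1/(m+1) \<le> 1/(2*m) - 1/(2*(m+1))"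
proof -
  have e1: "1/(m + 1 - 1/2) - 1/(m+1) = 1/((2*m+1)*(m+1))" using assms by (simp add: field_simps)
  have e2: "1/(2*m) - 1/(2*(m+1)) = 1/((2*m)*(m+1))" using assms by (simp add: field_simps)
  have "1/((2*m+1)*(m+1)) \<le> 1/((2*m)*(m+1))" using assms by (intro frac_le) (auto intro!: mult_right_mono)
  thus ?thesis using e1 e2 by simp
qed
lemma ineq4: assumes "(m::real) \<ge> 1" shows "1/(3*m+2) - 1/(3*(m+1)+2) \<le> 1/(m+1-1/3) - 1/(m+1)"
proof -
  have e1: "1/(3*m+2) - 1/(3*(m+1)+2) = 3/((3*m+2)*(3*m+5))" using assms by (simp add: field_simps)
  have f1: "1/(m+1-1/3) = 3/(3*m+2)" using assms by (simp add: field_simps)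
  have f2: "1/(m+1) = 3/(3*m+3)" using assms by (simp add: field_simps)
  have f3: "3/(3*m+2) - 3/(3*m+3) = 3/((3*m+2)*(3*m+3))" using assms by (simp add: field_simps)
  have e2: "1/(m+1-1/3) - 1/(m+1) = 3/((3*m+2)*(3*m+3))" using f1 f2 f3 by simp
  have "3/((3*m+2)*(3*m+5)) \<le> 3/((3*m+2)*(3*m+3))" using assms by (intro frac_le) (auto intro!: mult_left_mono)
  thus ?thesis using e1 e2 by simp
qed

lemma Vs_iter: "Vs m = (\<Sum>q=1..m. \<Sum>k<q. 1 / (real q ^ 2 * real (m - k) ^ 2))"
proof -
  have "(\<Sum>q=1..m. \<Sum>k<q. 1 / (real q ^ 2 * real (m - k) ^ 2))
      = (\<Sum>p\<in>Sigma {1..m} (\<lambda>q. {..<q}). 1 / (real (fst p) ^ 2 * real (m - snd p) ^ 2))"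
    by (subst sum.Sigma) (auto simp: split_beta)
  also have "\<dots> = (\<Sum>p\<in>PS m. wt p)"
  proof (rule sum.reindex_bij_witness[where i = "\<lambda>p. (fst p, m - snd p)" and j = "\<lambda>p. (fst p, m - snd p)"])
    fix a assume "a \<in> Sigma {1..m} (\<lambda>q. {..<q})"
    then obtain q k where a: "a = (q, k)" "1 \<le> q" "q \<le> m" "k < q" by auto
    show "(fst (fst a, m - snd a), m - snd (fst a, m - snd a)) = a" using a by auto
    show "(fst a, m - snd a) \<in> PS m" using a by (auto simp: PS_def)
    show "wt (fst a, m - snd a) = 1 / (real (fst a) ^ 2 * real (m - snd a) ^ 2)"
      using a by (simp add: wt_def power_mult_distrib)
  next
    fix b assume "b \<in> PS m"
    then obtain q r where b: "b = (q, r)" "1 \<le> q" "q \<le> m" "1 \<le> r" "r \<le> m" "m < q + r" by (auto simp: PS_def)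
    show "(fst (fst b, m - snd b), m - snd (fst b, m - snd b)) = b" using b by auto
    show "(fst b, m - snd b) \<in> Sigma {1..m} (\<lambda>q. {..<q})" using b by auto
  qed
  finally show ?thesis by (simp add: Vs_def)
qed

lemma tel_up:
  assumes "q \<le> m"
  shows "(\<Sum>k<q. 1 / real (m - k) ^ 2) \<le> 1 / (real m - real q + 1/2) - 1 / (real m + 1/2)"
  using assms
proof (induction q)
  case 0 thus ?case by simp
next
  case (Suc q)
  define x where "x = real m - real q"
  have x1: "x \<ge> 1" using Suc.prems by (simp add: x_def)
  have mk: "real (m - q) = x" using Suc.prems by (simp add: x_def of_nat_diff)
  have step: "1 / x^2 \<le> 1 / (x - 1/2) - 1 / (x + 1/2)"
    using x1 by (rule ineq1)
  have "(\<Sum>k<Suc q. 1 / real (m - k) ^ 2) = (\<Sum>k<q. 1 / real (m - k) ^ 2) + 1 / x^2"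
    by (simp add: mk)
  also have "\<dots> \<le> (1 / (x + 1/2) - 1 / (real m + 1/2)) + (1 / (x - 1/2) - 1 / (x + 1/2))"
    using Suc.IH Suc.prems step unfolding x_def by (intro add_mono) auto
  also have "\<dots> = 1 / (real m - real (Suc q) + 1/2) - 1 / (real m + 1/2)"
    by (simp add: x_def algebra_simps)
  finally show ?case .
qed

lemma tel_low:
  assumes "q \<le> m"
  shows "(\<Sum>k<q. 1 / real (m - k) ^ 2) \<ge> 1 / (real m - real q + 2/3) - 1 / (real m + 2/3)"
  using assms
proof (induction q)
  case 0 thus ?case by simp
next
  case (Suc q)
  define x where "x = real m - real q"
  have x1: "x \<ge> 1" using Suc.prems by (simp add: x_def)
  have mk: "real (m - q) = x" using Suc.prems by (simp add: x_def of_nat_diff)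
  have step: "1 / x^2 \<ge> 1 / (x - 1/3) - 1 / (x + 2/3)"
    using x1 by (rule ineq2)
  have "(1 / (x + 2/3) - 1 / (real m + 2/3)) + (1 / (x - 1/3) - 1 / (x + 2/3))
      \<le> (\<Sum>k<q. 1 / real (m - k) ^ 2) + 1 / x^2"
    using Suc.IH Suc.prems step unfolding x_def by (intro add_mono) auto
  also have "\<dots> = (\<Sum>k<Suc q. 1 / real (m - k) ^ 2)"
    by (simp add: mk)
  finally show ?case by (simp add: x_def algebra_simps)
qed

lemma row_identity:
  assumes q: "q \<ge> 1" "real q < M"
  shows "1 / real q ^ 2 * (1 / (M - real q) - 1 / M) = 1 / M^2 * (1 / real q + 1 / (M - real q))"
  using q by (simp add: field_simps power2_eq_square)

lemma rev_sum:
  "(\<Sum>q=1..m. 1 / (real m + a - real q)) = (\<Sum>k=1..m. 1 / (real k - 1 + a))"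
proof -
  have "(\<Sum>q=1..m. 1 / (real m + a - real q)) = (\<Sum>k=1..m. 1 / (real m + a - real (m + 1 - k)))"
    by (rule sum.atLeastAtMost_rev)
  also have "\<dots> = (\<Sum>k=1..m. 1 / (real k - 1 + a))"
    by (intro sum.cong refl) (auto simp: of_nat_diff)
  finally show ?thesis .
qed

lemma half_sum: "m \<ge> 1 \<Longrightarrow> (\<Sum>k=1..m. (1 / (real k - 1/2) - 1 / real k)) \<le> 3/2 - 1 / (2 * real m)"
proof (induction m rule: dec_induct)
  case base thus ?case by simp
next
  case (step m)
  have m1: "real m \<ge> 1" using step by simp
  have "1 / (real (Suc m) - 1/2) - 1 / real (Suc m) \<le> 1 / (2 * real m) - 1 / (2 * real (Suc m))"
    using ineq3[OF m1] by (simp add: algebra_simps)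
  thus ?case using step.IH by simp
qed

lemma third_sum: "m \<ge> 1 \<Longrightarrow> (\<Sum>k=1..m. (1 / (real k - 1/3) - 1 / real k)) \<ge> 7/10 - 1 / (3 * real m + 2)"
proof (induction m rule: dec_induct)
  case base thus ?case by simp
next
  case (step m)
  have m1: "real m \<ge> 1" using step by simp
  have "1 / (3 * real m + 2) - 1 / (3 * real (Suc m) + 2) \<le> 1 / (real (Suc m) - 1/3) - 1 / real (Suc m)"
    using ineq4[OF m1] by (simp add: algebra_simps)
  thus ?case using step.IH by simp
qed

lemma harm_eq: "harm m = (\<Sum>k=1..m. 1 / real k)"
  by (simp add: harm_def inverse_eq_divide)

lemma Vs_upper:
  assumes m: "m \<ge> 1"
  shows "(real m + 1/2)^2 * Vs m \<le> 2 * harm m + 3/2"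
proof -
  define M where "M = real m + 1/2"
  have M0: "M > 0" by (simp add: M_def)
  have "Vs m \<le> (\<Sum>q=1..m. 1 / real q ^ 2 * (1 / (M - real q) - 1 / M))"
    unfolding Vs_iter
  proof (intro sum_mono)
    fix q assume q: "q \<in> {1..m}"
    have "(\<Sum>k<q. 1 / (real q ^ 2 * real (m - k) ^ 2)) = 1 / real q ^ 2 * (\<Sum>k<q. 1 / real (m - k) ^ 2)"
      by (simp add: sum_distrib_left)
    also have "\<dots> \<le> 1 / real q ^ 2 * (1 / (real m - real q + 1/2) - 1 / (real m + 1/2))"
      using q by (intro mult_left_mono tel_up) auto
    finally show "(\<Sum>k<q. 1 / (real q ^ 2 * real (m - k) ^ 2)) \<le> 1 / real q ^ 2 * (1 / (M - real q) - 1 / M)"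
      by (simp add: M_def algebra_simps)
  qed
  also have "\<dots> = (\<Sum>q=1..m. 1 / M^2 * (1 / real q + 1 / (M - real q)))"
    by (intro sum.cong refl row_identity) (auto simp: M_def)
  also have "\<dots> = 1 / M^2 * (\<Sum>q=1..m. (1 / real q + 1 / (M - real q)))"
    by (rule sum_distrib_left[symmetric])
  also have "\<dots> = 1 / M^2 * (harm m + (\<Sum>q=1..m. 1 / (real m + 1/2 - real q)))"
    by (simp only: sum.distrib harm_eq M_def)
  also have "(\<Sum>q=1..m. 1 / (real m + 1/2 - real q)) = (\<Sum>k=1..m. 1 / (real k - 1 + 1/2))"
    by (rule rev_sum)
  also have "\<dots> = harm m + (\<Sum>k=1..m. (1 / (real k - 1/2) - 1 / real k))"
    by (simp add: harm_eq sum.distrib[symmetric] sum_subtractf)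
  also have "\<dots> \<le> harm m + 3/2"
    using half_sum[OF m] m by (smt (verit) divide_nonneg_nonneg of_nat_0_le_iff)
  finally have "Vs m \<le> 1 / M^2 * (harm m + (harm m + 3/2))"
    using M0 by (simp add: divide_right_mono)
  thus ?thesis using M0 by (simp add: M_def field_simps)
qed


lemma Vs_lower:
  assumes m: "m \<ge> 1"
  shows "(real m + 2/3)^2 * Vs m \<ge> 2 * harm m + 7/10 - 1 / (3 * real m + 2)"
proof -
  define M where "M = real m + 2/3"
  have M0: "M > 0" by (simp add: M_def)
  have "(\<Sum>k=1..m. (1 / (real k - 1/3) - 1 / real k)) \<ge> 7/10 - 1 / (3 * real m + 2)"
    by (rule third_sum[OF m])
  hence "harm m + (7/10 - 1 / (3 * real m + 2)) \<le> harm m + (\<Sum>k=1..m. (1 / (real k - 1/3) - 1 / real k))"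
    by linarith
  also have "\<dots> = (\<Sum>k=1..m. 1 / (real k - 1 + 2/3))"
    by (simp add: harm_eq sum.distrib[symmetric] sum_subtractf)
  also have "\<dots> = (\<Sum>q=1..m. 1 / (real m + 2/3 - real q))"
    by (rule rev_sum[symmetric])
  finally have h: "harm m + (7/10 - 1 / (3 * real m + 2)) \<le> (\<Sum>q=1..m. 1 / (real m + 2/3 - real q))" .
  have "1 / M^2 * (harm m + (harm m + (7/10 - 1 / (3 * real m + 2))))
      \<le> 1 / M^2 * (harm m + (\<Sum>q=1..m. 1 / (real m + 2/3 - real q)))"
    using h by (intro mult_left_mono) auto
  also have "\<dots> = 1 / M^2 * (\<Sum>q=1..m. (1 / real q + 1 / (M - real q)))"
    by (simp only: sum.distrib harm_eq M_def)
  also have "\<dots> = (\<Sum>q=1..m. 1 / M^2 * (1 / real q + 1 / (M - real q)))"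
    by (rule sum_distrib_left)
  also have "\<dots> = (\<Sum>q=1..m. 1 / real q ^ 2 * (1 / (M - real q) - 1 / M))"
    by (intro sum.cong refl row_identity[symmetric]) (auto simp: M_def)
  also have "\<dots> \<le> Vs m"
    unfolding Vs_iter
  proof (intro sum_mono)
    fix q assume q: "q \<in> {1..m}"
    have "1 / real q ^ 2 * (1 / (M - real q) - 1 / M) = 1 / real q ^ 2 * (1 / (real m - real q + 2/3) - 1 / (real m + 2/3))"
      by (simp add: M_def algebra_simps)
    also have "\<dots> \<le> 1 / real q ^ 2 * (\<Sum>k<q. 1 / real (m - k) ^ 2)"
      using q by (intro mult_left_mono tel_low) auto
    also have "\<dots> = (\<Sum>k<q. 1 / (real q ^ 2 * real (m - k) ^ 2))"
      by (simp add: sum_distrib_left)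
    finally show "1 / real q ^ 2 * (1 / (M - real q) - 1 / M) \<le> (\<Sum>k<q. 1 / (real q ^ 2 * real (m - k) ^ 2))" .
  qed
  finally have H: "1 / M^2 * (2 * harm m + 7/10 - 1 / (3 * real m + 2)) \<le> Vs m"
    by (simp add: algebra_simps)
  have "2 * harm m + 7/10 - 1 / (3 * real m + 2) = M^2 * (1 / M^2 * (2 * harm m + 7/10 - 1 / (3 * real m + 2)))"
    using M0 by simp
  also have "\<dots> \<le> M^2 * Vs m" using H by (intro mult_left_mono) auto
  finally show ?thesis by (simp add: M_def)
qed

lemma harm_lower: assumes "m \<ge> 1" shows "ln (real m) + euler_mascheroni \<le> (harm m :: real)"
proof -
  have "euler_mascheroni \<le> harm m - ln (real m)"
  proof (rule LIMSEQ_le_const2[OF euler_mascheroni_LIMSEQ])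
    show "\<exists>N. \<forall>n\<ge>N. harm n - ln (real n) \<le> harm m - ln (real m)"
      using assms by (intro exI[of _ m] allI impI euler_mascheroni_sequence_decreasing) auto
  qed
  thus ?thesis by simp
qed

lemma harm_upper: assumes "m \<ge> 1" shows "(harm m :: real) \<le> ln (real m + 1) + euler_mascheroni"
proof -
  have a: "harm m - ln (real m + 1) + inverse (2 * real m + 2) \<le> (euler_mascheroni :: real)"
    using euler_mascheroni_bounds[OF assms] by (simp add: algebra_simps)
  have b: "inverse (2 * real m + 2) \<ge> 0" by simp
  show ?thesis using a b by linarith
qed

lemma gamma_bounds: "euler_mascheroni > (0.575::real)" "euler_mascheroni < (0.6::real)"
  using euler_mascheroni_gt_19_over_33 euler_mascheroni_less_13_over_22 by simp_all

lemma harm_ge1: "m \<ge> 1 \<Longrightarrow> (harm m :: real) \<ge> 1"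
proof -
  assume "m \<ge> 1"
  hence "harm 1 \<le> (harm m :: real)" by (rule harm_mono)
  thus ?thesis by (simp add: harm_expand)
qed

lemma Vs_nonneg: "Vs m \<ge> 0"
  unfolding Vs_def wt_def by (intro sum_nonneg) auto

lemma VY:
  fixes y :: real
  assumes m: "m \<ge> 1" and y: "real m \<le> y" "y < real m + 1"
  shows "\<bar>y^2 * Vs m - (2 * ln y + 2 * euler_mascheroni + 11/10)\<bar> \<le> 2/5 + (6 * ln y + 16) / y"
proof -
  define g :: real where "g = euler_mascheroni"
  have g: "g > 0.575" "g < 0.6" using gamma_bounds by (simp_all add: g_def)
  have m1: "real m \<ge> 1" using m by simp
  have y1: "y \<ge> 1" using y m1 by linarith
  have y0: "y > 0" using y1 by simp
  have lny0: "ln y \<ge> 0" using y1 by simp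
  have inv_m: "1 / real m \<le> 2 / y"
    using y m1 by (simp add: field_simps)
  have H: "(harm m :: real) \<ge> 1" using harm_ge1[OF m] .
  have Hl: "ln (real m) + g \<le> harm m" using harm_lower[OF m] by (simp add: g_def)
  have Hu: "harm m \<le> ln (real m + 1) + g" using harm_upper[OF m] by (simp add: g_def)
  have ln_m1: "ln (real m + 1) \<le> ln y + 1 / y"
  proof -
    have "ln ((real m + 1) / y) \<le> (real m + 1) / y - 1" using y0 m1 by (intro ln_le_minus_one) auto
    also have "\<dots> \<le> 1 / y" using y y0 by (simp add: field_simps)
    finally show ?thesis using y0 m1 by (simp add: ln_div)
  qed
  have ln_m: "ln y \<le> ln (real m) + 2 / y"
  proof -
    have "ln (y / real m) \<le> y / real m - 1" using y0 m1 by (intro ln_le_minus_one) auto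
    also have "\<dots> = (y - real m) / real m" using m1 by (simp add: field_simps)
    also have "\<dots> \<le> 1 / real m" using y m1 by (intro divide_right_mono) auto
    finally show ?thesis using y0 m1 inv_m by (simp add: ln_div)
  qed
  define V where "V = Vs m"
  have V0: "V \<ge> 0" by (simp add: V_def Vs_nonneg)
  define M where "M = real m + 1/2"
  have M: "M \<ge> 3/2" "2 * M > y" "y < M + 1/2" using m1 y by (auto simp: M_def)
  have MV: "M^2 * V \<le> 2 * harm m + 3/2" unfolding M_def V_def by (rule Vs_upper[OF m])
  have t2: "y^2 / M^2 \<le> 1 + 7 / (3 * y)"
  proof -
    have "y^2 - M^2 = (y - M) * (y + M)" by (simp add: power2_eq_square algebra_simps)
    also have "\<dots> \<le> 1/2 * (y + M)" using M y0 by (intro mult_right_mono) auto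
    finally have a: "y^2 \<le> M^2 + (y + M) / 2" by linarith
    have "(y + M) / 2 \<le> (M + 1/2 + M) / 2" using M by simp
    also have "\<dots> \<le> 7/6 * M" using M by simp
    finally have b: "y^2 \<le> M^2 + 7/6 * M" using a by linarith
    have "y^2 / M^2 \<le> (M^2 + 7/6 * M) / M^2" using b M by (intro divide_right_mono) auto
    also have "\<dots> = 1 + 7 / (6 * M)" using M by (simp add: field_simps power2_eq_square)
    also have "7 / (6 * M) \<le> 7 / (3 * y)" using M y0 by (intro divide_left_mono) auto
    finally show ?thesis by simp
  qed
  define X where "X = 2 * ln y + 2 / y + 2 * g + 3/2"
  have HX: "2 * harm m + 3/2 \<le> X" using Hu ln_m1 by (simp add: X_def)
  have X0: "X \<ge> 0" using HX H by simp
  have Xb: "X \<le> 2 * ln y + 47/10"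
  proof -
    have "2 / y \<le> 2" using y1 by (simp add: field_simps)
    thus ?thesis using g by (simp add: X_def)
  qed
  have up: "y^2 * V \<le> 2 * ln y + 2 * g + 11/10 + 2/5 + (6 * ln y + 16) / y"
  proof -
    have "y^2 * V = (y^2 / M^2) * (M^2 * V)" using M by (simp add: field_simps)
    also have "\<dots> \<le> (y^2 / M^2) * X" using MV HX by (intro mult_left_mono) auto
    also have "\<dots> \<le> (1 + 7 / (3 * y)) * X" using t2 X0 by (intro mult_right_mono) auto
    also have "\<dots> = X + 7 / (3 * y) * X" by (simp add: algebra_simps)
    also have "7 / (3 * y) * X \<le> 7 / (3 * y) * (2 * ln y + 47/10)" using Xb y0 by (intro mult_left_mono) auto
    also have "X + 7 / (3 * y) * (2 * ln y + 47/10) = 2 * ln y + 2 * g + 3/2 + (14/3 * ln y + 2 + 329/30) / y"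
      using y0 by (simp add: X_def field_simps)
    also have "(14/3 * ln y + 2 + 329/30) / y \<le> (6 * ln y + 16) / y"
    proof (rule divide_right_mono)
      show "14/3 * ln y + 2 + 329/30 \<le> 6 * ln y + 16" using lny0 by linarith
    qed (use y0 in simp)
    finally show ?thesis by simp
  qed
  define N where "N = real m + 2/3"
  have N: "N > 0" "N \<ge> 5/3" using m1 by (auto simp: N_def)
  have NV: "N^2 * V \<ge> 2 * harm m + 7/10 - 1 / (3 * real m + 2)" unfolding N_def V_def by (rule Vs_lower[OF m])
  define Y where "Y = 2 * harm m + 7/10 - 1 / (3 * real m + 2)"
  have inv3: "1 / (3 * real m + 2) \<le> 1 / y" using y y0 by (intro divide_left_mono) auto
  have inv3': "1 / (3 * real m + 2) \<le> 1/5" using m1 by (intro divide_left_mono) auto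
  have Y0: "Y \<ge> 0" using H inv3' unfolding Y_def by linarith
  have Yl: "Y \<ge> 2 * ln y + 2 * g + 7/10 - 5 / y"
    using Hl ln_m inv3 by (simp add: Y_def)
  have Yu: "Y \<le> 2 * ln y + 39/10"
  proof -
    have a: "1 / y \<le> 1" using y1 by simp
    have b: "1 / (3 * real m + 2) \<ge> 0" by simp
    show ?thesis using Hu ln_m1 g a b unfolding Y_def by linarith
  qed
  have s2: "y^2 / N^2 \<ge> 1 - 8 / (3 * y)"
  proof -
    define u where "u = (2/3) / N"
    have u: "u \<le> 2 / (3 * real m)" "u \<ge> 0" using m1 N by (auto simp: u_def N_def field_simps)
    have "real m / N = 1 - u" using N by (simp add: u_def N_def field_simps)
    hence "(real m / N)^2 = (1 - u)^2" by simp
    also have "\<dots> \<ge> 1 - 2 * u" by (simp add: power2_eq_square algebra_simps)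
    finally have a: "(real m / N)^2 \<ge> 1 - 2 * u" .
    have "2 * u \<le> 4 / (3 * real m)" using u by simp
    also have "4 / (3 * real m) = 4/3 * (1 / real m)" by simp
    also have "\<dots> \<le> 4/3 * (2 / y)" using inv_m by (intro mult_left_mono) auto
    finally have b: "2 * u \<le> 8 / (3 * y)" by simp
    have "(real m / N)^2 \<le> (y / N)^2" using m1 y N by (intro power_mono divide_right_mono) auto
    thus ?thesis using a b by (simp add: power_divide)
  qed
  have low: "y^2 * V \<ge> 2 * ln y + 2 * g + 11/10 - 2/5 - (6 * ln y + 16) / y"
  proof -
    have "(1 - 8 / (3 * y)) * Y \<le> (y^2 / N^2) * Y" using s2 Y0 by (intro mult_right_mono) auto
    also have "\<dots> \<le> (y^2 / N^2) * (N^2 * V)" using NV by (intro mult_left_mono) (auto simp: Y_def)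
    also have "\<dots> = y^2 * V" using N by (simp add: field_simps)
    finally have a: "(1 - 8 / (3 * y)) * Y \<le> y^2 * V" .
    have "8 / (3 * y) * Y \<le> 8 / (3 * y) * (2 * ln y + 39/10)" using Yu y0 by (intro mult_left_mono) auto
    also have "\<dots> = (16/3 * ln y + 52/5) / y" using y0 by (simp add: field_simps)
    finally have b: "8 / (3 * y) * Y \<le> (16/3 * ln y + 52/5) / y" .
    have c: "(16/3 * ln y + 52/5) / y + 5 / y \<le> (6 * ln y + 16) / y"
    proof -
      have "(16/3 * ln y + 52/5) / y + 5 / y = (16/3 * ln y + 52/5 + 5) / y" by (simp add: add_divide_distrib)
      also have "\<dots> \<le> (6 * ln y + 16) / y"
      proof (rule divide_right_mono)
        show "16/3 * ln y + 52/5 + 5 \<le> 6 * ln y + 16" using lny0 by linarith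
      qed (use y0 in simp)
      finally show ?thesis .
    qed
    have "(1 - 8 / (3 * y)) * Y = Y - 8 / (3 * y) * Y" by (simp add: algebra_simps)
    thus ?thesis using a b c Yl by linarith
  qed
  show ?thesis using up low by (simp add: V_def g_def abs_le_iff)
qed

lemma farey_finite: "finite (farey Q)"
proof -
  have "farey Q \<subseteq> (\<lambda>p. real (fst p) / real (snd p)) ` ({0..Q} \<times> {0..Q})"
  proof
    fix x assume "x \<in> farey Q"
    then obtain a q where "x = real a / real q" "a \<le> q" "q \<le> Q" by (auto simp: farey_def)
    thus "x \<in> (\<lambda>p. real (fst p) / real (snd p)) ` ({0..Q} \<times> {0..Q})"
      by (intro image_eqI[of _ _ "(a, q)"]) auto
  qed
  thus ?thesis by (rule finite_subset) simp
qed

lemma farey_le1: "x \<in> farey Q \<Longrightarrow> x \<le> 1"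
  by (auto simp: farey_def divide_le_eq_1)

lemma farey_list_props:
  "set (farey_list Q) = farey Q" "sorted (farey_list Q)" "distinct (farey_list Q)"
  using farey_finite by (simp_all add: farey_list_def)

lemma farey_strict:
  assumes "i < j" "j < length (farey_list Q)"
  shows "farey_list Q ! i < farey_list Q ! j"
proof -
  have "farey_list Q ! i \<le> farey_list Q ! j"
    using assms farey_list_props(2) by (intro sorted_nth_mono) auto
  moreover have "farey_list Q ! i \<noteq> farey_list Q ! j"
    using assms farey_list_props(3) nth_eq_iff_index_eq[of "farey_list Q" i j] by auto
  ultimately show ?thesis by simp
qed

lemma exists_r:
  fixes a q Q :: nat
  assumes a: "1 \<le> a" "a < q" and qQ: "q \<le> Q" and cop: "coprime a q"
  shows "\<exists>r. 1 \<le> r \<and> r \<le> Q \<and> Q < q + r \<and> q dvd a * r + 1"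
proof -
  have q2: "q \<ge> 2" using a by simp
  obtain x y where xy: "a * x = q * y + gcd a q" using bezout_nat[of a q] a by auto
  hence xy': "a * x = q * y + 1" using cop by (simp add: coprime_iff_gcd_eq_1)
  define t where "t = x mod q"
  define r where "r = Q - (Q + t) mod q"
  have modlt: "(Q + t) mod q < q" using q2 by simp
  have r1: "r \<le> Q" "Q < q + r" "1 \<le> r" using modlt qQ by (auto simp: r_def)
  have rt: "r + t = q * ((Q + t) div q)"
  proof -
    have e: "(Q + t) div q * q + (Q + t) mod q = Q + t" by (rule div_mult_mod_eq)
    have "r + t = Q + t - (Q + t) mod q" using modlt qQ unfolding r_def by simp
    also have "\<dots> = (Q + t) div q * q" using e by linarith
    finally show ?thesis by (simp add: mult.commute)
  qed
  have "(a * t) mod q = (a * x) mod q" unfolding t_def by (simp add: mod_mult_right_eq)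
  also have "\<dots> = 1" using xy' q2 by (simp add: mod_Suc)
  finally have at: "a * t = q * ((a * t) div q) + 1"
    using div_mult_mod_eq[of "a * t" q] by (simp add: mult.commute)
  have "a * r + 1 + q * ((a * t) div q) = a * (r + t)"
    using at by (simp add: algebra_simps)
  also have "\<dots> = q * (a * ((Q + t) div q))" using rt by simp
  finally have "q dvd a * r + 1 + q * ((a * t) div q)" by (metis dvd_triv_left)
  hence "q dvd a * r + 1" by (metis dvd_add_times_triv_right_iff mult.commute)
  thus ?thesis using r1 by blast
qed

lemma gap_bound:
  assumes j: "Suc j < length (farey_list Q)"
  shows "\<exists>q r a b. farey_list Q ! j = real a / real q \<and> 1 \<le> a \<and> a < q \<and> q \<le> Q \<and> 1 \<le> r \<and> r \<le> Q
          \<and> Q < q + r \<and> b * q = a * r + 1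
          \<and> farey_list Q ! Suc j - farey_list Q ! j \<le> 1 / (real q * real r)"
proof -
  define g where "g = farey_list Q"
  have gj: "g ! j \<in> farey Q" using j nth_mem[of j "farey_list Q"] farey_list_props(1)[of Q] by (simp add: g_def)
  then obtain a q where aq: "g ! j = real a / real q" "1 \<le> a" "a \<le> q" "q \<le> Q" "coprime a q"
    by (auto simp: farey_def)
  have lt: "g ! j < g ! Suc j" using j farey_strict by (simp add: g_def)
  have le1: "g ! Suc j \<le> 1" using j nth_mem[of "Suc j" "farey_list Q"] farey_list_props(1)[of Q] farey_le1 by (auto simp: g_def)
  have aq': "a < q"
  proof (rule ccontr)
    assume "\<not> a < q"
    hence "a = q" using aq by simp
    hence "g ! j = 1" using aq by simp
    thus False using lt le1 by simp
  qed
  obtain r where r: "1 \<le> r" "r \<le> Q" "Q < q + r" "q dvd a * r + 1"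
    using exists_r[OF aq(2) aq' aq(4) aq(5)] by blast
  define b where "b = (a * r + 1) div q"
  have bq: "b * q = a * r + 1" using r by (simp add: b_def)
  have q0: "q > 0" using aq' by simp
  have b1: "1 \<le> b" using bq by (cases b) auto
  have br: "b \<le> r"
  proof -
    have "a * r + 1 \<le> (q - 1) * r + 1" using aq' by (intro add_mono mult_right_mono) auto
    also have "\<dots> \<le> q * r" using r(1) q0 by (cases q) (auto simp: algebra_simps)
    finally have "b * q \<le> r * q" using bq by (simp add: mult.commute)
    thus ?thesis using q0 by simp
  qed
  have cop: "coprime b r"
  proof -
    have d0: "gcd b r dvd b * q" "gcd b r dvd a * r" by auto
    have d1: "gcd b r dvd a * r + 1" using d0(1) bq by simp
    have "gcd b r dvd 1" using d1 d0(2) by (metis dvd_add_right_iff)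
    thus ?thesis by (simp add: coprime_iff_gcd_eq_1)
  qed
  define x where "x = real b / real r"
  have xF: "x \<in> farey Q" unfolding x_def farey_def using b1 br r cop by blast
  have diff: "x - g ! j = 1 / (real q * real r)"
  proof -
    have "real b * real q = real a * real r + 1" using bq by (metis of_nat_1 of_nat_add of_nat_mult)
    thus ?thesis using q0 r(1) unfolding x_def aq(1) by (simp add: field_simps)
  qed
  have "1 / (real q * real r) > 0" using q0 r(1) by simp
  hence xgt: "x > g ! j" using diff by linarith
  obtain k where k: "k < length g" "g ! k = x" using xF farey_list_props(1) by (metis g_def in_set_conv_nth)
  have "j < k"
  proof (rule ccontr)
    assume "\<not> j < k"
    hence "g ! k \<le> g ! j" using j farey_list_props(2) by (intro sorted_nth_mono) (auto simp: g_def)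
    thus False using k xgt by simp
  qed
  hence "g ! Suc j \<le> g ! k" using k farey_list_props(2) by (intro sorted_nth_mono) (auto simp: g_def)
  hence "g ! Suc j - g ! j \<le> 1 / (real q * real r)" using k diff by simp
  thus ?thesis using aq aq' r bq unfolding g_def by blast
qed

lemma same_a:
  fixes a a' b b' q r :: nat
  assumes "b * q = a * r + 1" "b' * q = a' * r + 1" "a \<le> a'" "a' < q"
  shows "a = a'"
proof -
  have cop: "coprime q r"
  proof -
    have d0: "gcd q r dvd b * q" "gcd q r dvd a * r" by auto
    have d1: "gcd q r dvd a * r + 1" using d0(1) assms(1) by simp
    have "gcd q r dvd 1" using d1 d0(2) by (metis dvd_add_right_iff)
    thus ?thesis by (simp add: coprime_iff_gcd_eq_1)
  qed
  have "a * r + 1 \<le> a' * r + 1" using assms(3) by (simp add: mult_right_mono)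
  hence "b * q \<le> b' * q" using assms by simp
  have "(a' - a) * r = (a' * r + 1) - (a * r + 1)" by (simp add: diff_mult_distrib)
  also have "\<dots> = b' * q - b * q" using assms by simp
  also have "\<dots> = (b' - b) * q" by (simp add: diff_mult_distrib)
  finally have "q dvd (a' - a) * r" by simp
  hence "q dvd a' - a" using cop by (simp add: coprime_dvd_mult_left_iff)
  moreover have "a' - a < q" using assms by simp
  ultimately have "a' - a = 0" using nat_dvd_not_less by (cases "a' - a") auto
  thus ?thesis using assms(3) by simp
qed

lemma S2_le_Cs:
  assumes Q: "Q \<ge> 1"
  shows "S2 Q \<le> Cs Q - 1 / real Q ^ 2"
proof -
  define g where "g = farey_list Q"
  define J where "J = {..<length g - 1}"
  define P where "P j q r a b \<longleftrightarrow> g ! j = real a / real q \<and> 1 \<le> a \<and> a < q \<and> q \<le> Q \<and> 1 \<le> r \<and> r \<le> Q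
          \<and> Q < q + r \<and> b * q = a * r + 1 \<and> g ! Suc j - g ! j \<le> 1 / (real q * real r)" for j q r a b
  define \<phi> where "\<phi> j = (SOME p. \<exists>a b. P j (fst p) (snd p) a b)" for j
  have \<phi>P: "\<exists>a b. P j (fst (\<phi> j)) (snd (\<phi> j)) a b" if "j \<in> J" for j
  proof -
    have "Suc j < length g" using that by (auto simp: J_def)
    then obtain q r a b where "P j q r a b" using gap_bound[of j Q] unfolding P_def g_def by blast
    hence "\<exists>p. \<exists>a b. P j (fst p) (snd p) a b" by (intro exI[of _ "(q, r)"]) auto
    thus ?thesis unfolding \<phi>_def by (rule someI_ex)
  qed
  define P' where "P' = {p \<in> PS Q. coprime (fst p) (snd p)} - {(1, Q)}"
  have inP': "\<phi> j \<in> P'" if jJ: "j \<in> J" for j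
  proof -
    obtain a b where ab: "P j (fst (\<phi> j)) (snd (\<phi> j)) a b" using \<phi>P[OF jJ] by blast
    define q r where "q = fst (\<phi> j)" and "r = snd (\<phi> j)"
    have h: "1 \<le> a" "a < q" "q \<le> Q" "1 \<le> r" "r \<le> Q" "Q < q + r" "b * q = a * r + 1"
      using ab by (auto simp: P_def q_def r_def)
    have cop: "coprime q r"
    proof -
      have d0: "gcd q r dvd b * q" "gcd q r dvd a * r" by auto
      have d1: "gcd q r dvd a * r + 1" using d0(1) h(7) by simp
      have "gcd q r dvd 1" using d1 d0(2) by (metis dvd_add_right_iff)
      thus ?thesis by (simp add: coprime_iff_gcd_eq_1)
    qed
    have "\<phi> j = (q, r)" by (simp add: q_def r_def)
    thus ?thesis using h cop by (auto simp: P'_def PS_def)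
  qed
  have gapw: "(g ! (j + 1) - g ! j)^2 \<le> wt (\<phi> j)" if jJ: "j \<in> J" for j
  proof -
    obtain a b where ab: "P j (fst (\<phi> j)) (snd (\<phi> j)) a b" using \<phi>P[OF jJ] by blast
    have "Suc j < length g" using jJ by (auto simp: J_def)
    hence pos: "0 \<le> g ! Suc j - g ! j" using farey_strict[of j "Suc j" Q] by (simp add: g_def)
    have "(g ! Suc j - g ! j)^2 \<le> (1 / (real (fst (\<phi> j)) * real (snd (\<phi> j))))^2"
      using ab pos by (intro power_mono) (auto simp: P_def)
    thus ?thesis by (simp add: wt_def power_divide)
  qed
  have inj: "inj_on \<phi> J"
  proof (rule inj_onI)
    fix j k assume jk: "j \<in> J" "k \<in> J" "\<phi> j = \<phi> k"
    obtain a b where ab: "P j (fst (\<phi> j)) (snd (\<phi> j)) a b" using \<phi>P[OF jk(1)] by blast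
    obtain a' b' where ab': "P k (fst (\<phi> j)) (snd (\<phi> j)) a' b'" using \<phi>P[OF jk(2)] jk(3) by auto
    have aa: "a = a'"
    proof (cases "a \<le> a'")
      case True thus ?thesis using ab ab' by (intro same_a[of b _ a _ b']) (auto simp: P_def)
    next
      case False thus ?thesis using ab ab' same_a[of b' "fst (\<phi> j)" a' "snd (\<phi> j)" b a] by (auto simp: P_def)
    qed
    have "g ! j = g ! k" using ab ab' aa by (simp add: P_def)
    moreover have "j < length g" "k < length g" using jk by (auto simp: J_def)
    ultimately show "j = k" using farey_list_props(3) nth_eq_iff_index_eq by (auto simp: g_def)
  qed
  have finP': "finite P'" using finite_PS by (auto simp: P'_def)
  have "S2 Q = (\<Sum>j\<in>J. (g ! (j + 1) - g ! j)^2)" by (simp add: S2_def g_def J_def Let_def)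
  also have "\<dots> \<le> (\<Sum>j\<in>J. wt (\<phi> j))" by (intro sum_mono gapw)
  also have "\<dots> = (\<Sum>p\<in>\<phi> ` J. wt p)" using inj by (simp add: sum.reindex)
  also have "\<dots> \<le> (\<Sum>p\<in>P'. wt p)"
    using finP' inP' by (intro sum_mono2) (auto simp: wt_def)
  also have "\<dots> = Cs Q - wt (1, Q)"
  proof -
    have mem: "(1, Q) \<in> {p \<in> PS Q. coprime (fst p) (snd p)}" using Q by (auto simp: PS_def)
    have "finite {p \<in> PS Q. coprime (fst p) (snd p)}" using finite_PS by auto
    thus ?thesis unfolding Cs_def P'_def using sum.remove[OF _ mem, of wt] by simp
  qed
  also have "wt (1, Q) = 1 / real Q ^ 2" by (simp add: wt_def)
  finally show ?thesis .
qed

lemma tail_ln: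
  fixes D Q :: real
  assumes Q: "Q \<ge> 1" and D: "D \<ge> Q"
  shows "ln ((D + 1) / Q) / (D + 1)^2 \<le> (ln (D / Q) + 2) / D - (ln ((D + 1) / Q) + 2) / (D + 1)"
proof -
  have D1: "D \<ge> 1" using Q D by linarith
  have Dp: "D > 0" "D + 1 > 0" using D1 by auto
  define u where "u = ln ((D + 1) / Q)"
  define \<delta> where "\<delta> = ln ((D + 1) / D)"
  have u0: "u \<ge> 0" using Q D by (simp add: u_def)
  have \<delta>: "\<delta> \<le> 1 / D"
  proof -
    have "\<delta> \<le> (D + 1) / D - 1" unfolding \<delta>_def using D1 by (intro ln_le_minus_one) auto
    also have "\<dots> = 1 / D" using D1 by (simp add: field_simps)
    finally show ?thesis .
  qed
  have lnD: "ln (D / Q) = u - \<delta>" using Q D1 by (simp add: u_def \<delta>_def ln_div)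
  have e1: "(u - \<delta> + 2) / D = (u + 2) / D - \<delta> / D" by (simp add: diff_divide_distrib add_divide_distrib)
  have e2: "(u + 2) / D - (u + 2) / (D + 1) = (u + 2) / (D * (D + 1))"
  proof -
    have "D > 0" "D + 1 > 0" using D1 by auto
    thus ?thesis by (simp add: field_simps)
  qed
  have "(ln (D / Q) + 2) / D - (ln ((D + 1) / Q) + 2) / (D + 1) = (u + 2) / (D * (D + 1)) - \<delta> / D"
    unfolding lnD u_def[symmetric] using e1 e2 by linarith
  also have "\<dots> \<ge> (u + 2) / (D * (D + 1)) - 1 / D^2"
  proof -
    have "\<delta> / D \<le> (1 / D) / D" using \<delta> D1 by (intro divide_right_mono) auto
    thus ?thesis by (simp add: power2_eq_square)
  qed
  moreover have "(u + 2) / (D * (D + 1)) - 1 / D^2 \<ge> u / (D + 1)^2"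
  proof -
    define e where "e = D + 1"
    have ep: "e > 0" using Dp by (simp add: e_def)
    have "(u + 2) / (D * e) - u / e^2 = ((u + 2) * e - u * D) / (D * e^2)"
      using Dp ep by (simp add: field_simps power2_eq_square)
    also have "(u + 2) * e - u * D = u + 2 * e" by (simp add: e_def algebra_simps)
    finally have e1: "(u + 2) / (D * e) - u / e^2 = (u + 2 * e) / (D * e^2)" .
    have "(u + 2 * e) / (D * e^2) \<ge> (2 * e) / (D * e^2)"
      using u0 Dp ep by (intro divide_right_mono) auto
    moreover have "(2 * e) / (D * e^2) = 2 / (D * e)"
      using Dp ep by (simp add: field_simps power2_eq_square)
    moreover have "2 / (D * e) \<ge> 1 / D^2"
    proof -
      have "2 / (D * e) = 1 / (D * e / 2)" by simp
      also have "1 / (D * e / 2) \<ge> 1 / D^2"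
      proof (rule frac_le)
        show "0 < D * e / 2" using Dp ep by simp
        have "D * 1 \<le> D * D" using D1 by (intro mult_left_mono) auto
        moreover have "D * e = D * D + D" by (simp add: e_def algebra_simps)
        ultimately show "D * e / 2 \<le> D^2" by (simp add: power2_eq_square)
      qed auto
      finally show ?thesis .
    qed
    ultimately show ?thesis using e1 unfolding e_def by linarith
  qed
  ultimately show ?thesis unfolding u_def by linarith
qed

lemma tail_inv:
  fixes D :: real
  assumes "D \<ge> 1"
  shows "1 / (D + 1)^2 \<le> 1 / D - 1 / (D + 1)"
proof -
  have "1 / D - 1 / (D + 1) = 1 / (D * (D + 1))" using assms by (simp add: field_simps)
  moreover have "1 / (D + 1)^2 \<le> 1 / (D * (D + 1))"
    using assms by (intro frac_le) (auto simp: power2_eq_square intro!: mult_right_mono)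
  ultimately show ?thesis by simp
qed

lemma dser_deriv_summable:
  assumes s: "s > 1" and a: "\<And>n. \<bar>a n\<bar> \<le> 1"
  shows "summable (\<lambda>n. a (Suc n) * ln (real (Suc n)) / real (Suc n) powr s)"
proof -
  define \<epsilon> where "\<epsilon> = (s - 1) / 2"
  have \<epsilon>0: "\<epsilon> > 0" using s by (simp add: \<epsilon>_def)
  have sM: "summable (\<lambda>n. (1/\<epsilon>) * (1 / real (Suc n) powr (s - \<epsilon>)))"
    by (intro summable_mult summable_Suc_powr) (use s in \<open>simp add: \<epsilon>_def field_simps\<close>)
  show ?thesis
  proof (rule summable_comparison_test[OF _ sM], intro exI allI impI)
    fix n :: nat
    have ln0: "ln (real (Suc n)) \<ge> 0" by simp
    have lnb: "ln (real (Suc n)) \<le> real (Suc n) powr \<epsilon> / \<epsilon>"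
      by (rule ln_powr_bound) (use \<epsilon>0 in auto)
    have "norm (a (Suc n) * ln (real (Suc n)) / real (Suc n) powr s)
        = \<bar>a (Suc n)\<bar> * ln (real (Suc n)) / real (Suc n) powr s"
      using ln0 by (simp add: abs_mult abs_div)
    also have "\<dots> \<le> 1 * ln (real (Suc n)) / real (Suc n) powr s"
      using a ln0 by (intro divide_right_mono mult_right_mono) auto
    also have "\<dots> \<le> (real (Suc n) powr \<epsilon> / \<epsilon>) / real (Suc n) powr s"
      using lnb by (intro divide_right_mono) auto
    also have "\<dots> = (1/\<epsilon>) * (1 / real (Suc n) powr (s - \<epsilon>))"
      by (simp add: powr_diff field_simps)
    finally show "norm (a (Suc n) * ln (real (Suc n)) / real (Suc n) powr s)
        \<le> (1/\<epsilon>) * (1 / real (Suc n) powr (s - \<epsilon>))" .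
  qed
qed

lemma partial_inv_sq: "(\<Sum>d=1..Q. 1 / real d ^ 2) \<le> pi^2 / 6"
proof -
  have S: "(\<lambda>n. 1 / (real n + 1)^2) sums (pi^2 / 6)" using inverse_squares_sums by (simp add: add.commute)
  have "(\<Sum>d=1..Q. 1 / real d ^ 2) = (\<Sum>n<Q. 1 / real (Suc n) ^ 2)"
    by (subst sum_bounds_lt_plus1[symmetric]) (rule refl)
  also have "\<dots> = (\<Sum>n<Q. 1 / (real n + 1) ^ 2)" by (simp add: add.commute)
  also have "\<dots> \<le> (\<Sum>n. 1 / (real n + 1) ^ 2)"
    using S by (intro sum_le_suminf) (auto simp: sums_iff)
  also have "\<dots> = pi^2 / 6" using S by (simp add: sums_iff)
  finally show ?thesis .
qed


lemma main_sum:
  assumes Q: "Q \<ge> 1" and c: "c \<ge> 0"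
  shows "(\<Sum>d=1..Q. mu d / real d ^ 2 * (2 * ln (real Q / real d) + c))
     \<le> (2 * ln (real Q) + c) * (6 / pi^2) - 2 * (deriv zeta_real 2 / (zeta_real 2)^2) + (c + 4) / real Q"
proof -
  define L where "L = ln (real Q)"
  define a where "a n = mu (Suc n) / real (Suc n) powr 2" for n
  define b where "b n = mu (Suc n) * ln (real (Suc n)) / real (Suc n) powr 2" for n
  define F where "F n = (2 * L + c) * a n - 2 * b n" for n
  have sa: "summable a" unfolding a_def by (rule dser_summable) (auto simp: mu_abs)
  have sb: "summable b" unfolding b_def by (rule dser_deriv_summable) (auto simp: mu_abs)
  have sF: "summable F" unfolding F_def by (intro summable_diff summable_mult sa sb)
  have sumF: "suminf F = (2 * L + c) * (6 / pi^2) - 2 * (deriv zeta_real 2 / (zeta_real 2)^2)"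
  proof -
    have s1: "summable (\<lambda>n. (2 * L + c) * a n)" "summable (\<lambda>n. 2 * b n)"
      using sa sb by (auto intro: summable_mult)
    have "suminf F = (\<Sum>n. (2 * L + c) * a n) - (\<Sum>n. 2 * b n)"
      unfolding F_def by (rule suminf_diff[OF s1, symmetric])
    also have "\<dots> = (2 * L + c) * suminf a - 2 * suminf b"
      using sa sb by (simp add: suminf_mult)
    also have "suminf a = 6 / pi^2" using mu_A2 unfolding a_def[abs_def] dser_def by simp
    also have "suminf b = deriv zeta_real 2 / (zeta_real 2)^2" using mu_A1 unfolding b_def[abs_def] by simp
    finally show ?thesis .
  qed
  have Fd: "F n = mu (Suc n) / real (Suc n) ^ 2 * (2 * ln (real Q / real (Suc n)) + c)" for n
  proof -
    have lnq: "ln (real Q / real (Suc n)) = L - ln (real (Suc n))" using Q by (simp add: L_def ln_div)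
    have ea: "a n = mu (Suc n) / real (Suc n) ^ 2" by (simp add: a_def)
    have eb: "b n = mu (Suc n) / real (Suc n) ^ 2 * ln (real (Suc n))" by (simp add: b_def)
    have key: "(2 * L + c) * X - 2 * (X * l) = X * (2 * (L - l) + c)" for X l :: real
      by (simp add: algebra_simps)
    show ?thesis unfolding F_def ea eb key lnq ..
  qed
  have lhs: "(\<Sum>d=1..Q. mu d / real d ^ 2 * (2 * ln (real Q / real d) + c)) = (\<Sum>n<Q. F n)"
    by (subst sum_bounds_lt_plus1[symmetric]) (intro sum.cong refl, simp only: Fd)
  have split: "suminf F = (\<Sum>n. F (n + Q)) + (\<Sum>n<Q. F n)" by (rule suminf_split_initial_segment[OF sF])
  define h where "h n = 1 / real (n + Q)" for n
  define f where "f n = (ln (real (n + Q) / real Q) + 2) / real (n + Q)" for n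
  define B where "B n = c * (h n - h (Suc n)) + 2 * (f n - f (Suc n))" for n
  have hlim: "h \<longlonglongrightarrow> 0"
  proof -
    have "(\<lambda>n. 1 / real (n + Q)) \<longlonglongrightarrow> 0"
      using LIMSEQ_ignore_initial_segment[OF lim_inverse_n', of Q] by simp
    thus ?thesis unfolding h_def[abs_def] .
  qed
  have flim: "f \<longlonglongrightarrow> 0"
  proof -
    have l1: "(\<lambda>n. ln (real n) / real n powr 1) \<longlonglongrightarrow> 0" by (rule lim_ln_over_power) simp
    have "(\<lambda>n. ln (real (n + Q)) / real (n + Q) powr 1) \<longlonglongrightarrow> 0"
      using LIMSEQ_ignore_initial_segment[OF l1, of Q] by simp
    hence l2: "(\<lambda>n. ln (real (n + Q)) / real (n + Q)) \<longlonglongrightarrow> 0"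
    proof (rule Lim_transform_eventually)
      show "\<forall>\<^sub>F n in sequentially. ln (real (n + Q)) / real (n + Q) powr 1 = ln (real (n + Q)) / real (n + Q)"
        using Q by (intro always_eventually allI) simp
    qed
    have l3: "(\<lambda>n. (2 - L) * h n) \<longlonglongrightarrow> 0" using hlim by (simp add: tendsto_mult_right_zero)
    have "(\<lambda>n. ln (real (n + Q)) / real (n + Q) + (2 - L) * h n) \<longlonglongrightarrow> 0 + 0"
      by (intro tendsto_add l2 l3)
    moreover have "f n = ln (real (n + Q)) / real (n + Q) + (2 - L) * h n" for n
    proof -
      have lnq: "ln (real (n + Q) / real Q) = ln (real (n + Q)) - L" using Q by (simp add: ln_div L_def)
      have key2: "(A - L + 2) / X = A / X + (2 - L) * (1 / X)" for A X :: real
        by (simp add: diff_divide_distrib add_divide_distrib)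
      show ?thesis unfolding f_def h_def lnq key2 ..
    qed
    ultimately show ?thesis unfolding f_def[abs_def] by simp
  qed
  have sumB: "B sums (c * (1 / real Q) + 2 * (2 / real Q))"
  proof -
    have t1: "(\<lambda>n. h n - h (Suc n)) sums (1 / real Q)" using telescope_sums'[OF hlim] by (simp add: h_def)
    have t2: "(\<lambda>n. f n - f (Suc n)) sums (2 / real Q)" using telescope_sums'[OF flim] Q by (simp add: f_def)
    show ?thesis unfolding B_def by (intro sums_add sums_mult t1 t2)
  qed
  have termB: "- F (n + Q) \<le> B n" for n
  proof -
    define D where "D = real (n + Q)"
    have DQ: "D \<ge> real Q" "real Q \<ge> 1" using Q by (auto simp: D_def)
    have D1: "D \<ge> 1" using DQ by linarith
    have sD: "real (Suc (n + Q)) = D + 1" by (simp add: D_def)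
    have lnpos: "ln ((D + 1) / real Q) \<ge> 0" using DQ by simp
    have Feq: "F (n + Q) = mu (Suc (n + Q)) / (D + 1)^2 * (c - 2 * ln ((D + 1) / real Q))"
    proof -
      have "ln (real Q / (D + 1)) = - ln ((D + 1) / real Q)" using DQ D1 by (simp add: ln_div)
      thus ?thesis unfolding Fd sD by simp
    qed
    have "- F (n + Q) \<le> \<bar>F (n + Q)\<bar>" by simp
    also have "\<bar>F (n + Q)\<bar> = \<bar>mu (Suc (n + Q))\<bar> / (D + 1)^2 * \<bar>c - 2 * ln ((D + 1) / real Q)\<bar>"
      unfolding Feq by (simp add: abs_mult abs_divide)
    also have "\<dots> \<le> 1 / (D + 1)^2 * (c + 2 * ln ((D + 1) / real Q))"
    proof (intro mult_mono divide_right_mono)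
      show "\<bar>c - 2 * ln ((D + 1) / real Q)\<bar> \<le> c + 2 * ln ((D + 1) / real Q)" using c lnpos by linarith
    qed (auto simp: mu_abs)
    also have "\<dots> = c * (1 / (D + 1)^2) + 2 * (ln ((D + 1) / real Q) / (D + 1)^2)" by (simp add: add_divide_distrib)
    also have "\<dots> \<le> c * (1 / D - 1 / (D + 1)) + 2 * ((ln (D / real Q) + 2) / D - (ln ((D + 1) / real Q) + 2) / (D + 1))"
      using tail_inv[OF D1] tail_ln[OF DQ(2) DQ(1)] c by (intro add_mono mult_left_mono) auto
    also have "\<dots> = B n" by (simp add: B_def h_def f_def D_def add.commute)
    finally show ?thesis .
  qed
  have sF': "summable (\<lambda>n. - F (n + Q))" using summable_ignore_initial_segment[OF sF, of Q] by (rule summable_minus)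
  have "(\<Sum>n. - F (n + Q)) \<le> suminf B"
    using termB sF' sumB by (intro suminf_le) (auto simp: sums_iff)
  moreover have "(\<Sum>n. - F (n + Q)) = - (\<Sum>n. F (n + Q))"
    using summable_ignore_initial_segment[OF sF, of Q] by (rule suminf_minus)
  moreover have "suminf B = (c + 4) / real Q" using sumB by (simp add: sums_iff add_divide_distrib)
  ultimately have "- (\<Sum>n. F (n + Q)) \<le> (c + 4) / real Q" by simp
  thus ?thesis unfolding lhs using split sumF by (simp add: L_def)
qed


lemma div_bounds:
  assumes d: "d \<in> {1..Q}"
  shows "Q div d \<ge> 1" "real (Q div d) \<le> real Q / real d" "real Q / real d < real (Q div d) + 1"
proof -
  have d0: "d > 0" "d \<le> Q" using d by auto
  show "Q div d \<ge> 1" using d0 by (simp add: Suc_le_eq div_greater_zero_iff)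
  have e: "real Q = real (Q div d) * real d + real (Q mod d)"
    by (metis div_mult_mod_eq of_nat_add of_nat_mult)
  have m: "real (Q mod d) < real d" using d0 by simp
  have dp: "real d > 0" using d0 by simp
  show "real (Q div d) \<le> real Q / real d" using e dp by (simp add: field_simps)
  show "real Q / real d < real (Q div d) + 1" using e m dp by (simp add: field_simps)
qed

lemma Q2Cs:
  assumes Q: "Q \<ge> 1"
  defines "c \<equiv> 2 * euler_mascheroni + 11/10"
  shows "real Q^2 * Cs Q \<le> (2 * ln (real Q) + c) * (6 / pi^2) - 2 * (deriv zeta_real 2 / (zeta_real 2)^2)
          + (c + 4) / real Q + 2/5 * (pi^2 / 6) + (6 * ln (real Q) + 16) * (ln (real Q) + 2) / real Q"
proof -
  define L where "L = ln (real Q)"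
  have c0: "c \<ge> 0" using gamma_bounds by (simp add: c_def)
  have Qp: "real Q > 0" using Q by simp
  have L0: "L \<ge> 0" using Q by (simp add: L_def)
  define y where "y d = real Q / real d" for d
  define T where "T d = mu d / real d ^ 2 * ((y d)^2 * Vs (Q div d))" for d
  have exp: "real Q^2 * Cs Q = (\<Sum>d=1..Q. T d)"
  proof -
    have "real Q^2 * Cs Q = (\<Sum>d=1..Q. real Q^2 * (mu d / real d ^ 4 * Vs (Q div d)))"
      unfolding Cs_mu by (rule sum_distrib_left)
    also have "\<dots> = (\<Sum>d=1..Q. T d)"
    proof (intro sum.cong refl)
      fix d assume "d \<in> {1..Q}"
      hence "real d > 0" by simp
      thus "real Q^2 * (mu d / real d ^ 4 * Vs (Q div d)) = T d"
        by (simp add: T_def y_def field_simps power2_eq_square eval_nat_numeral)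
    qed
    finally show ?thesis .
  qed
  have tm: "T d \<le> mu d / real d ^ 2 * (2 * ln (real Q / real d) + c) + 1 / real d ^ 2 * (2/5)
      + (6 * L + 16) / real Q * (1 / real d)" if d: "d \<in> {1..Q}" for d
  proof -
    have dp: "real d \<ge> 1" using d by simp
    have db: "Q div d \<ge> 1" "real (Q div d) \<le> y d" "y d < real (Q div d) + 1"
      using div_bounds[OF d] by (simp_all add: y_def)
    have yp: "y d \<ge> 1" using db by linarith
    define G where "G = 2 * ln (y d) + c"
    define E where "E = 2/5 + (6 * ln (y d) + 16) / y d"
    have VYd: "\<bar>(y d)^2 * Vs (Q div d) - G\<bar> \<le> E"
      using VY[OF db] by (simp add: G_def E_def c_def)
    have "T d = mu d / real d ^ 2 * G + mu d / real d ^ 2 * ((y d)^2 * Vs (Q div d) - G)"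
      by (simp add: T_def algebra_simps)
    also have "mu d / real d ^ 2 * ((y d)^2 * Vs (Q div d) - G) \<le> 1 / real d ^ 2 * E"
    proof -
      have "mu d / real d ^ 2 * ((y d)^2 * Vs (Q div d) - G) \<le> \<bar>mu d / real d ^ 2\<bar> * \<bar>(y d)^2 * Vs (Q div d) - G\<bar>"
        by (metis abs_ge_self abs_mult)
      also have "\<dots> \<le> 1 / real d ^ 2 * E"
        using VYd mu_abs[of d] dp by (intro mult_mono) (auto simp: abs_div intro!: divide_right_mono)
      finally show ?thesis .
    qed
    also have "1 / real d ^ 2 * E = 1 / real d ^ 2 * (2/5) + (6 * ln (y d) + 16) / real Q * (1 / real d)"
      using dp Qp by (simp add: E_def y_def field_simps power2_eq_square)
    also have "(6 * ln (y d) + 16) / real Q * (1 / real d) \<le> (6 * L + 16) / real Q * (1 / real d)"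
    proof -
      have "ln (y d) \<le> L" using dp Qp by (simp add: y_def L_def ln_div)
      thus ?thesis using dp Qp by (intro mult_right_mono divide_right_mono) auto
    qed
    finally show ?thesis by (simp add: G_def y_def)
  qed
  have "(\<Sum>d=1..Q. T d) \<le> (\<Sum>d=1..Q. mu d / real d ^ 2 * (2 * ln (real Q / real d) + c) + 1 / real d ^ 2 * (2/5)
      + (6 * L + 16) / real Q * (1 / real d))"
    by (intro sum_mono tm)
  also have "\<dots> = (\<Sum>d=1..Q. mu d / real d ^ 2 * (2 * ln (real Q / real d) + c))
      + (\<Sum>d=1..Q. 1 / real d ^ 2) * (2/5) + (6 * L + 16) / real Q * harm Q"
    by (simp add: sum.distrib sum_distrib_left sum_distrib_right harm_eq)
  also have "(\<Sum>d=1..Q. mu d / real d ^ 2 * (2 * ln (real Q / real d) + c))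
      \<le> (2 * ln (real Q) + c) * (6 / pi^2) - 2 * (deriv zeta_real 2 / (zeta_real 2)^2) + (c + 4) / real Q"
    by (rule main_sum[OF Q c0])
  also have "(\<Sum>d=1..Q. 1 / real d ^ 2) * (2/5) \<le> pi^2 / 6 * (2/5)"
    using partial_inv_sq by (intro mult_right_mono) auto
  also have "(6 * L + 16) / real Q * harm Q \<le> (6 * L + 16) / real Q * (L + 2)"
  proof -
    have "harm Q \<le> ln (real Q + 1) + euler_mascheroni" by (rule harm_upper[OF Q])
    moreover have "ln (real Q + 1) \<le> L + 1"
    proof -
      have "ln ((real Q + 1) / real Q) \<le> (real Q + 1) / real Q - 1" using Qp by (intro ln_le_minus_one) auto
      also have "\<dots> = 1 / real Q" using Qp by (simp add: field_simps)
      also have "\<dots> \<le> 1" using Q by simp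
      finally show ?thesis using Qp by (simp add: ln_div L_def)
    qed
    ultimately have "harm Q \<le> L + 2" using gamma_bounds by linarith
    thus ?thesis using L0 Qp by (intro mult_left_mono) auto
  qed
  finally show ?thesis unfolding exp L_def by (simp add: algebra_simps)
qed

theorem theorem2:
  fixes Q :: nat
  assumes "Q \<ge> 2"
  shows "S2 Q - (12 * ln (real Q) / (pi^2 * (real Q)^2)
           - 2 / (real Q)^2 * (deriv zeta_real 2 / (zeta_real 2)^2)
           + (2 * euler_mascheroni + 1) * 6 / ((real Q)^2 * pi^2))
         \<le> (64 * (ln (real Q))^2 + 106 * ln (real Q) + 269) / (real Q)^3"
proof -
  have Q: "Q \<ge> 1" using assms by simp
  define L where "L = ln (real Q)"
  define Z where "Z = deriv zeta_real 2 / (zeta_real 2)^2"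
  define g :: real where "g = euler_mascheroni"
  define c where "c = 2 * g + 11/10"
  have Qp: "real Q > 0" using Q by simp
  have L0: "L \<ge> 0" using Q by (simp add: L_def)
  have g: "g > 0.575" "g < 0.6" using gamma_bounds by (simp_all add: g_def)
  have pi: "pi > 3" "pi < 3.15" using pi_gt3 pi_approx(2) by simp_all
  have pi2a: "(3::real)^2 < pi^2" using power_strict_mono[of 3 pi 2] pi by simp
  have "pi * pi < 3.15 * 3.15" using pi by (intro mult_strict_mono) auto
  hence pi2b: "pi^2 < 10" by (simp add: power2_eq_square)
  have pi2: "pi^2 > 9" "pi^2 < 10" using pi2a pi2b by simp_all
  have S: "S2 Q \<le> Cs Q - 1 / real Q ^ 2" by (rule S2_le_Cs[OF Q])
  have C: "real Q^2 * Cs Q \<le> (2 * L + c) * (6 / pi^2) - 2 * Z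
          + (c + 4) / real Q + 2/5 * (pi^2 / 6) + (6 * L + 16) * (L + 2) / real Q"
    using Q2Cs[OF Q] by (simp add: L_def Z_def c_def g_def)
  define K where "K = 12 * L / (pi^2 * (real Q)^2) - 2 / (real Q)^2 * Z + (2 * g + 1) * 6 / ((real Q)^2 * pi^2)"
  have QK: "real Q^2 * K = 12 * L / pi^2 - 2 * Z + (2 * g + 1) * 6 / pi^2"
    using Qp by (simp add: K_def field_simps)
  have QS: "real Q^2 * S2 Q \<le> real Q^2 * Cs Q - 1"
  proof -
    have "real Q^2 * S2 Q \<le> real Q^2 * (Cs Q - 1 / real Q ^ 2)" using S by (intro mult_left_mono) auto
    thus ?thesis using Qp by (simp add: right_diff_distrib)
  qed
  have num: "0.6 / pi^2 + 2/5 * (pi^2 / 6) \<le> 1"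
  proof -
    have "0.6 / pi^2 \<le> 0.6 / 9"
    proof (rule divide_left_mono)
      show "9 \<le> pi^2" using pi2(1) by linarith
      show "0 < pi^2 * 9" using pi2(1) by simp
    qed simp
    thus ?thesis using pi2(2) by linarith
  qed
  have split6: "(2 * L + c) * (6 / pi^2) = 12 * L / pi^2 + (2 * g + 1) * 6 / pi^2 + 0.6 / pi^2"
    by (simp add: c_def field_simps)
  have "real Q^2 * (S2 Q - K) \<le> 0.6 / pi^2 + 2/5 * (pi^2 / 6) - 1 + ((c + 4) + (6 * L + 16) * (L + 2)) / real Q"
    using QS C QK split6 by (simp add: right_diff_distrib add_divide_distrib)
  also have "\<dots> \<le> ((c + 4) + (6 * L + 16) * (L + 2)) / real Q" using num by simp
  also have "\<dots> \<le> (64 * L^2 + 106 * L + 269) / real Q"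
  proof (rule divide_right_mono)
    have "c \<le> 23/10" using g by (simp add: c_def)
    show "(c + 4) + (6 * L + 16) * (L + 2) \<le> 64 * L^2 + 106 * L + 269"
    proof -
      have e: "(6 * L + 16) * (L + 2) = 6 * L^2 + 28 * L + 32" by (simp add: algebra_simps power2_eq_square)
      have "L^2 \<ge> 0" by simp
      thus ?thesis using e L0 \<open>c \<le> 23/10\<close> by linarith
    qed
  qed (use Qp in simp)
  finally have H: "real Q^2 * (S2 Q - K) \<le> (64 * L^2 + 106 * L + 269) / real Q" .
  have "S2 Q - K = (real Q^2 * (S2 Q - K)) / real Q^2" using Qp by simp
  also have "\<dots> \<le> ((64 * L^2 + 106 * L + 269) / real Q) / real Q^2"
    using H Qp by (intro divide_right_mono) auto
  also have "\<dots> = (64 * L^2 + 106 * L + 269) / real Q^3"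
    using Qp by (simp add: field_simps power2_eq_square power3_eq_cube)
  finally show ?thesis by (simp add: K_def L_def Z_def g_def)
qed

end
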